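(* Let $a<b$ be real numbers, let $M\colon[a,b]\to\mathbb{R}$ be non-decreasing, and let $N\colon[M(a),M(b)]\to\mathbb{R}$ be non-decreasing. Let \[H=\{y\in[M(a),M(b)] : M^{-1}[\{y\}]\text{ contains more than one point}\},\] and define $X,\Xi\colon[M(a),M(b)]\to[a,b]$ by $X(y)=\inf\{x\in[a,b]: y\le M(x)\}$ and $\Xi(y)=\sup\{x\in[a,b]: M(x)\le y\}$. For $y\in H$ let $\Delta N(y,-)=N(y)-N(y-)$ and $\Delta N(y,+)=N(y+)-N(y)$ (with the conventions $N(M(a)-)=N(M(a))$ and $N(M(b)+)=N(M(b))$), and let \[N_1=N-\sum_{y\in H}\Big(\Delta N(y,-)\,\mathbf 1_{[y,M(b)]}+\Delta N(y,+)\,\mathbf 1_{(y,M(b)]}\Big).\] Then for each bounded Borel function $g$ on the range of $M$, \[\int_a^b g(M(x))\,dN(M(x))=\int_{M(a)}^{M(b)} g(M(X(y)))\,dN_1(y)+\sum_{y\in H} g(M(X(y)))\,\Delta N(y,-)+\sum_{y\in H} g(M(\Xi(y)))\,\Delta N(y,+).\] Furthermore, the same identity holds with $X$ replaced by $\Xi$ in the first term on the right-hand side.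
   Context: "Non-decreasing" is what the paper calls increasing. For a non-decreasing function $F\colon[c,d]\to\mathbb{R}$, the measure corresponding to $F$ is the unique Borel measure $\mu$ on $[c,d]$ such that for every continuous $f\colon[c,d]\to\mathbb{R}$, $\int_{[c,d]} f\,d\mu$ equals the Riemann–Stieltjes integral $\int_c^d f(x)\,dF(x)$. For a bounded Borel function $f$, the Lebesgue–Stieltjes integral $\int_c^d f(x)\,dF(x)$ is defined as $\int_{[c,d]} f\,d\mu$. The notation $\int_a^b h(x)\,dN(M(x))$ means $\int_a^b h(x)\,d\Lambda(x)$ with $\Lambda=N\circ M$. *)

theory Defs
  imports "HOL-Analysis.Analysis"
begin

definition RS_has_integral ::
  "(real \<Rightarrow> real) \<Rightarrow> (real \<Rightarrow> real) \<Rightarrow> real \<Rightarrow> real \<Rightarrow> real \<Rightarrow> bool" where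
  "RS_has_integral f F c d I \<longleftrightarrow>
     (\<forall>\<epsilon>>0. \<exists>\<delta>>0. \<forall>(n::nat) (x::nat \<Rightarrow> real) (t::nat \<Rightarrow> real).
        (x 0 = c \<and> x n = d \<and>
         (\<forall>i<n. x i < x (Suc i) \<and> x (Suc i) - x i < \<delta> \<and> x i \<le> t i \<and> t i \<le> x (Suc i)))
        \<longrightarrow> \<bar>(\<Sum>i<n. f (t i) * (F (x (Suc i)) - F (x i))) - I\<bar> < \<epsilon>)"

definition LS_measure :: "real \<Rightarrow> real \<Rightarrow> (real \<Rightarrow> real) \<Rightarrow> real measure" where
  "LS_measure c d F = (THE \<mu>. sets \<mu> = sets (restrict_space borel {c..d}) \<and> finite_measure \<mu> \<and>
      (\<forall>f. continuous_on {c..d} f \<longrightarrow> RS_has_integral f F c d (\<integral>x. f x \<partial>\<mu>)))"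

definition LS_integral :: "real \<Rightarrow> real \<Rightarrow> (real \<Rightarrow> real) \<Rightarrow> (real \<Rightarrow> real) \<Rightarrow> real" where
  "LS_integral c d F f = (\<integral>x. f x \<partial>(LS_measure c d F))"

definition left_lim :: "real \<Rightarrow> (real \<Rightarrow> real) \<Rightarrow> real \<Rightarrow> real" where
  "left_lim c N y = (if y = c then N y else Lim (at_left y) N)"

definition right_lim :: "real \<Rightarrow> (real \<Rightarrow> real) \<Rightarrow> real \<Rightarrow> real" where
  "right_lim d N y = (if y = d then N y else Lim (at_right y) N)"

end

theory Submission
  imports Defs "HOL-Analysis.Analysis"
begin


lemma right_lim_tendsto:
  fixes F :: "real \<Rightarrow> real"
  assumes mono: "mono_on {c..d} F" and y: "c \<le> y" "y < d"
  shows "(F \<longlongrightarrow> right_lim d F y) (at_right y)"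
    and "right_lim d F y = Inf (F ` {y<..d})"
proof -
  let ?L = "Inf (F ` {y<..d})"
  have bdd: "bdd_below (F ` {y<..d})"
    using mono y by (auto simp: bdd_below_def mono_on_def intro!: exI[of _ "F y"])
  have ne: "F ` {y<..d} \<noteq> {}" using y by auto
  have T: "(F \<longlongrightarrow> ?L) (at_right y)"
  proof (rule order_tendstoI)
    fix a assume "a < ?L"
    then have "\<forall>t\<in>{y<..d}. a < F t"
      using bdd by (meson cInf_lower image_eqI less_le_trans)
    then show "eventually (\<lambda>t. a < F t) (at_right y)"
      using eventually_at_right_real[OF y(2)] by (auto elim: eventually_mono)
  next
    fix a assume "?L < a"
    then obtain t0 where t0: "t0 \<in> {y<..d}" "F t0 < a"
      using cInf_lessD[OF ne] by blast
    have "eventually (\<lambda>t. t \<in> {y<..<t0}) (at_right y)"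
      using t0 by (intro eventually_at_right_real) auto
    then show "eventually (\<lambda>t. F t < a) (at_right y)"
    proof (rule eventually_mono)
      fix t assume "t \<in> {y<..<t0}"
      then have "F t \<le> F t0" using mono t0 y by (auto simp: mono_on_def)
      then show "F t < a" using t0 by simp
    qed
  qed
  have "right_lim d F y = ?L"
    unfolding right_lim_def using y T by (auto intro!: tendsto_Lim)
  then show "(F \<longlongrightarrow> right_lim d F y) (at_right y)" "right_lim d F y = Inf (F ` {y<..d})"
    using T by auto
qed

lemma left_lim_tendsto:
  fixes F :: "real \<Rightarrow> real"
  assumes mono: "mono_on {c..d} F" and y: "c < y" "y \<le> d"
  shows "(F \<longlongrightarrow> left_lim c F y) (at_left y)"
    and "left_lim c F y = Sup (F ` {c..<y})"
proof -
  let ?L = "Sup (F ` {c..<y})"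
  have bdd: "bdd_above (F ` {c..<y})"
    using mono y by (auto simp: bdd_above_def mono_on_def intro!: exI[of _ "F y"])
  have ne: "F ` {c..<y} \<noteq> {}" using y by auto
  have T: "(F \<longlongrightarrow> ?L) (at_left y)"
  proof (rule order_tendstoI)
    fix a assume "?L < a"
    then have "\<forall>t\<in>{c..<y}. F t < a"
      using bdd by (meson cSup_upper image_eqI le_less_trans)
    then show "eventually (\<lambda>t. F t < a) (at_left y)"
      using eventually_at_left_real[OF y(1)] by (auto elim: eventually_mono)
  next
    fix a assume "a < ?L"
    then obtain t0 where t0: "t0 \<in> {c..<y}" "a < F t0"
      using less_cSupD[OF ne] by blast
    have "eventually (\<lambda>t. t \<in> {t0<..<y}) (at_left y)"
      using t0 by (intro eventually_at_left_real) auto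
    then show "eventually (\<lambda>t. a < F t) (at_left y)"
    proof (rule eventually_mono)
      fix t assume "t \<in> {t0<..<y}"
      then have "F t0 \<le> F t" using mono t0 y by (auto simp: mono_on_def)
      then show "a < F t" using t0 by simp
    qed
  qed
  have "left_lim c F y = ?L"
    unfolding left_lim_def using y T by (auto intro!: tendsto_Lim)
  then show "(F \<longlongrightarrow> left_lim c F y) (at_left y)" "left_lim c F y = Sup (F ` {c..<y})"
    using T by auto
qed

lemma right_lim_bounds:
  fixes F :: "real \<Rightarrow> real"
  assumes mono: "mono_on {c..d} F" and y: "c \<le> y" "y \<le> d"
  shows "F y \<le> right_lim d F y" "\<And>t. y < t \<Longrightarrow> t \<le> d \<Longrightarrow> right_lim d F y \<le> F t"
    "right_lim d F y \<le> F d"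
proof -
  have bdd: "y < d \<Longrightarrow> bdd_below (F ` {y<..d})"
    using mono y by (auto simp: bdd_below_def mono_on_def intro!: exI[of _ "F y"])
  show "F y \<le> right_lim d F y"
  proof (cases "y = d")
    case True then show ?thesis by (simp add: right_lim_def)
  next
    case False
    then show ?thesis using right_lim_tendsto(2)[OF mono y(1)] y mono
      by (auto intro!: cInf_greatest simp: mono_on_def)
  qed
  show "\<And>t. y < t \<Longrightarrow> t \<le> d \<Longrightarrow> right_lim d F y \<le> F t"
    using right_lim_tendsto(2)[OF mono y(1)] bdd by (auto intro!: cInf_lower)
  show "right_lim d F y \<le> F d"
  proof (cases "y = d")
    case True then show ?thesis by (simp add: right_lim_def)
  next
    case False
    then show ?thesis using right_lim_tendsto(2)[OF mono y(1)] bdd y by (auto intro!: cInf_lower)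
  qed
qed

lemma left_lim_bounds:
  fixes F :: "real \<Rightarrow> real"
  assumes mono: "mono_on {c..d} F" and y: "c \<le> y" "y \<le> d"
  shows "left_lim c F y \<le> F y" "\<And>t. c \<le> t \<Longrightarrow> t < y \<Longrightarrow> F t \<le> left_lim c F y"
    "F c \<le> left_lim c F y"
proof -
  have bdd: "c < y \<Longrightarrow> bdd_above (F ` {c..<y})"
    using mono y by (auto simp: bdd_above_def mono_on_def intro!: exI[of _ "F y"])
  show "left_lim c F y \<le> F y"
  proof (cases "y = c")
    case True then show ?thesis by (simp add: left_lim_def)
  next
    case False
    then show ?thesis using left_lim_tendsto(2)[OF mono _ y(2)] y mono
      by (auto intro!: cSup_least simp: mono_on_def)
  qed
  show "\<And>t. c \<le> t \<Longrightarrow> t < y \<Longrightarrow> F t \<le> left_lim c F y"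
    using left_lim_tendsto(2)[OF mono _ y(2)] bdd by (auto intro!: cSup_upper)
  show "F c \<le> left_lim c F y"
  proof (cases "y = c")
    case True then show ?thesis by (simp add: left_lim_def)
  next
    case False
    then show ?thesis using left_lim_tendsto(2)[OF mono _ y(2)] bdd y by (auto intro!: cSup_upper)
  qed
qed


lemma part_mono:
  fixes x :: "nat \<Rightarrow> real"
  assumes "\<forall>i<n. x i < x (Suc i)" "j \<le> k" "k \<le> n"
  shows "x j \<le> x k"
  using assms(2,3)
proof (induction k)
  case 0 then show ?case by simp
next
  case (Suc k)
  show ?case
  proof (cases "j = Suc k")
    case True then show ?thesis by simp
  next
    case False
    then have "x j \<le> x k" using Suc by simp
    also have "x k \<le> x (Suc k)" using assms(1) Suc.prems by (simp add: less_imp_le)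
    finally show ?thesis .
  qed
qed

lemma part_indicator_sum:
  fixes x :: "nat \<Rightarrow> real"
  assumes "\<forall>i<n. x i < x (Suc i)"
  shows "(\<Sum>i<n. indicator {x i<..x (Suc i)} u) = (indicator {x 0<..x n} u :: real)"
  using assms
proof (induction n)
  case 0 then show ?case by simp
next
  case (Suc n)
  have le: "x 0 \<le> x n" using part_mono[OF Suc.prems, of 0 n] by simp
  have lt: "x n < x (Suc n)" using Suc.prems by simp
  have "(\<Sum>i<Suc n. indicator {x i<..x (Suc i)} u) = indicator {x 0<..x n} u + (indicator {x n<..x (Suc n)} u :: real)"
    using Suc by simp
  also have "\<dots> = indicator {x 0<..x (Suc n)} u"
    using le lt by (auto simp: indicator_def)
  finally show ?case .
qed

lemma abel_sum:
  fixes f D :: "nat \<Rightarrow> real"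
  assumes "D 0 = 0"
  shows "(\<Sum>i<Suc m. f i * (D (Suc i) - D i)) = f m * D (Suc m) + (\<Sum>i<m. (f i - f (Suc i)) * D (Suc i))"
proof (induction m)
  case 0 then show ?case using assms by simp
next
  case (Suc m)
  then show ?case by (simp add: algebra_simps)
qed


lemma right_lim_mono:
  fixes F :: "real \<Rightarrow> real"
  assumes mono: "mono_on {c..d} F" and "c \<le> s" "s \<le> t" "t \<le> d"
  shows "right_lim d F s \<le> right_lim d F t"
proof (cases "s = t")
  case False
  then have "right_lim d F s \<le> F t" using right_lim_bounds(2)[OF mono, of s t] assms by auto
  also have "\<dots> \<le> right_lim d F t" using right_lim_bounds(1)[OF mono, of t] assms by auto
  finally show ?thesis .
qed simp

definition Gext :: "real \<Rightarrow> real \<Rightarrow> (real \<Rightarrow> real) \<Rightarrow> real \<Rightarrow> real" where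
  "Gext c d F t = (if t < c then F c else right_lim d F (min t d))"

lemma Gext_mono:
  fixes F :: "real \<Rightarrow> real"
  assumes mono: "mono_on {c..d} F" and cd: "c \<le> d" and xy: "x \<le> y"
  shows "Gext c d F x \<le> Gext c d F y"
proof -
  have "F c \<le> right_lim d F (min y d)" if "c \<le> y"
  proof -
    have "F c \<le> F (min y d)" using mono that cd by (auto simp: mono_on_def)
    also have "\<dots> \<le> right_lim d F (min y d)" using right_lim_bounds(1)[OF mono] that cd by auto
    finally show ?thesis .
  qed
  then show ?thesis unfolding Gext_def using xy cd
    by (auto intro!: right_lim_mono[OF mono])
qed

lemma Gext_rcont:
  fixes F :: "real \<Rightarrow> real"
  assumes mono: "mono_on {c..d} F" and cd: "c \<le> d"
  shows "continuous (at_right a) (Gext c d F)"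
  unfolding continuous_within
proof (cases "a < c")
  case True
  have "eventually (\<lambda>t. t \<in> {a<..<c}) (at_right a)" using True by (rule eventually_at_right_real)
  then have "eventually (\<lambda>t. Gext c d F t = Gext c d F a) (at_right a)"
    by (rule eventually_mono) (use True in \<open>auto simp: Gext_def\<close>)
  then show "(Gext c d F \<longlongrightarrow> Gext c d F a) (at_right a)"
    by (rule tendsto_eventually)
next
  case False
  show "(Gext c d F \<longlongrightarrow> Gext c d F a) (at_right a)"
  proof (cases "d \<le> a")
    case True
    have "eventually (\<lambda>t. t \<in> {a<..<a+1}) (at_right a)" by (rule eventually_at_right_real) simp
    then have "eventually (\<lambda>t. Gext c d F t = Gext c d F a) (at_right a)"
      by (rule eventually_mono) (use True False cd in \<open>auto simp: Gext_def min_def\<close>)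
    then show ?thesis by (rule tendsto_eventually)
  next
    case False2: False
    let ?R = "right_lim d F"
    have ca: "c \<le> a" "a < d" using False False2 by auto
    have Ga: "Gext c d F a = ?R a" using ca by (simp add: Gext_def)
    show ?thesis unfolding Ga
    proof (rule order_tendstoI)
      fix b assume "b < ?R a"
      have "eventually (\<lambda>t. t \<in> {a<..<d}) (at_right a)" using ca by (intro eventually_at_right_real)
      then show "eventually (\<lambda>t. b < Gext c d F t) (at_right a)"
      proof (rule eventually_mono)
        fix t assume t: "t \<in> {a<..<d}"
        then have "?R a \<le> ?R t" using right_lim_mono[OF mono] ca by auto
        then show "b < Gext c d F t" using t ca \<open>b < ?R a\<close> by (auto simp: Gext_def)
      qed
    next
      fix b assume b: "?R a < b"
      have ne: "F ` {a<..d} \<noteq> {}" using ca by auto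
      have "Inf (F ` {a<..d}) < b" using b right_lim_tendsto(2)[OF mono ca] by simp
      from cInf_lessD[OF ne this] obtain w where w: "w \<in> {a<..d}" "F w < b" by blast
      have "eventually (\<lambda>t. t \<in> {a<..<w}) (at_right a)" using w by (intro eventually_at_right_real) auto
      then show "eventually (\<lambda>t. Gext c d F t < b) (at_right a)"
      proof (rule eventually_mono)
        fix t assume t: "t \<in> {a<..<w}"
        then have "?R t \<le> F w" using right_lim_bounds(2)[OF mono, of t w] ca w by auto
        then show "Gext c d F t < b" using t ca w by (auto simp: Gext_def min_def)
      qed
    qed
  qed
qed

lemma LS_exists_cdf:
  fixes F :: "real \<Rightarrow> real"
  assumes mono: "mono_on {c..d} F" and cd: "c \<le> d"
  shows "\<exists>\<mu>. sets \<mu> = sets (restrict_space borel {c..d}) \<and> finite_measure \<mu> \<and>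
           (\<forall>s\<in>{c..d}. measure \<mu> {c..s} = right_lim d F s - F c)"
proof -
  let ?G = "Gext c d F"
  let ?M = "interval_measure ?G"
  have Gm: "\<And>x y. x \<le> y \<Longrightarrow> ?G x \<le> ?G y" using Gext_mono[OF mono cd] by blast
  have Gr: "\<And>a. continuous (at_right a) ?G" using Gext_rcont[OF mono cd] by blast
  have Ioc: "\<And>a b. a \<le> b \<Longrightarrow> emeasure ?M {a<..b} = ?G b - ?G a"
    using emeasure_interval_measure_Ioc[OF _ Gm Gr] by blast
  define \<mu> where "\<mu> = restrict_space ?M {c..d}"
  have sets: "sets \<mu> = sets (restrict_space borel {c..d})"
    unfolding \<mu>_def by (simp add: sets_restrict_space)
  have open0: "emeasure ?M {c-1<..<c} = 0"
  proof -
    have "emeasure ?M (\<Union>n. {c-1<..c - 1/(Suc n + 1)}) = 0"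
    proof (rule emeasure_UN_eq_0)
      fix n :: nat
      have "1/(Suc n + 1) < (1::real)" by (simp add: field_simps)
      then have le: "c - 1 \<le> c - 1/(Suc n + 1)" by linarith
      have "?G (c - 1/(Suc n + 1)) = F c" "?G (c - 1) = F c" by (auto simp: Gext_def)
      then show "emeasure ?M {c-1<..c - 1/(Suc n + 1)} = 0" using Ioc[OF le] by simp
    qed auto
    moreover have "{c-1<..<c} \<subseteq> (\<Union>n. {c-1<..c - 1/(Suc n + 1)})"
    proof
      fix x assume x: "x \<in> {c-1<..<c}"
      then obtain n :: nat where n: "1 / (c - x) < n" using reals_Archimedean2 by blast
      have pos: "0 < c - x" using x by simp
      then have "1 < n * (c - x)" using n by (simp add: field_simps)
      then have "1 / (Suc n + 1) \<le> c - x" using pos by (simp add: field_simps)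
      then show "x \<in> (\<Union>n. {c-1<..c - 1/(Suc n + 1)})" using x by (intro UN_I[of n]) auto
    qed
    moreover have "(\<Union>n. {c-1<..c - 1/(Suc n + 1)}) \<in> sets ?M" by auto
    ultimately show ?thesis by (metis emeasure_mono le_zero_eq)
  qed
  have cdf: "emeasure \<mu> {c..s} = ennreal (right_lim d F s - F c)" if s: "s \<in> {c..d}" for s
  proof -
    have "emeasure \<mu> {c..s} = emeasure ?M {c..s}"
      unfolding \<mu>_def using s by (intro emeasure_restrict_space) auto
    also have "\<dots> = emeasure ?M {c-1<..<c} + emeasure ?M {c..s}" using open0 by simp
    also have "\<dots> = emeasure ?M ({c-1<..<c} \<union> {c..s})" by (intro plus_emeasure) auto
    also have "{c-1<..<c} \<union> {c..s} = {c-1<..s}" using s by auto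
    also have "emeasure ?M {c-1<..s} = ?G s - ?G (c - 1)" using s by (intro Ioc) auto
    also have "?G s - ?G (c-1) = right_lim d F s - F c" using s by (simp add: Gext_def)
    finally show ?thesis .
  qed
  have fin: "finite_measure \<mu>"
  proof
    have "space \<mu> = {c..d}" unfolding \<mu>_def by (simp add: space_restrict_space)
    then show "emeasure \<mu> (space \<mu>) \<noteq> \<infinity>" using cdf[of d] cd by simp
  qed
  have "measure \<mu> {c..s} = right_lim d F s - F c" if s: "s \<in> {c..d}" for s
  proof -
    have "F c \<le> F s" using mono s by (auto simp: mono_on_def)
    also have "F s \<le> right_lim d F s" using right_lim_bounds(1)[OF mono] s by auto
    finally show ?thesis using cdf[OF s] by (simp add: measure_def)
  qed
  then show ?thesis using sets fin by blast
qed


lemma abel_sum':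
  fixes f D :: "nat \<Rightarrow> real"
  shows "(\<Sum>i<Suc m. f i * (D (Suc i) - D i)) = f m * D (Suc m) - f 0 * D 0 + (\<Sum>i<m. (f i - f (Suc i)) * D (Suc i))"
  by (induction m) (simp_all add: algebra_simps)

lemma RS_from_cdf:
  fixes F f :: "real \<Rightarrow> real"
  assumes mono: "mono_on {c..d} F" and cd: "c \<le> d"
    and sets: "sets \<mu> = sets (restrict_space borel {c..d})" and fin: "finite_measure \<mu>"
    and cdf: "\<forall>s\<in>{c..d}. measure \<mu> {c..s} = right_lim d F s - F c"
    and fc: "continuous_on {c..d} f"
  shows "RS_has_integral f F c d (\<integral>x. f x \<partial>\<mu>)"
proof -
  interpret finite_measure \<mu> by (rule fin)
  let ?R = "right_lim d F"
  have sp: "space \<mu> = {c..d}" using sets_eq_imp_space_eq[OF sets] by (simp add: space_restrict_space)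
  have meas: "A \<in> sets \<mu>" if "A \<subseteq> {c..d}" "A \<in> sets borel" for A
    using that unfolding sets by (subst sets_restrict_space_iff) auto
  have Rd: "?R d = F d" by (simp add: right_lim_def)
  have mIoc: "measure \<mu> {u<..v} = ?R v - ?R u" if "c \<le> u" "u \<le> v" "v \<le> d" for u v
  proof -
    have "{u<..v} = {c..v} - {c..u}" using that by auto
    then have "measure \<mu> {u<..v} = measure \<mu> {c..v} - measure \<mu> {c..u}"
      using that by (simp add: finite_measure_Diff meas)
    then show ?thesis using cdf that by simp
  qed
  have mpt: "measure \<mu> {c} = ?R c - F c" using cdf cd by (metis atLeastAtMost_singleton atLeastAtMost_iff order_refl)
  have mtot: "measure \<mu> (space \<mu>) = F d - F c" using cdf cd sp Rd by auto
  have fm: "f \<in> borel_measurable \<mu>"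
    by (subst measurable_cong_sets[OF sets refl]) (rule borel_measurable_continuous_on_restrict[OF fc])
  obtain B where B: "\<forall>u\<in>{c..d}. norm (f u) \<le> B"
    using compact_imp_bounded[OF compact_continuous_image[OF fc compact_Icc]] by (auto simp: bounded_iff)
  have fint: "integrable \<mu> f"
    by (rule integrable_const_bound[where B=B]) (use B sp fm in auto)
  show ?thesis
  proof (cases "c = d")
    case True
    have "emeasure \<mu> (space \<mu>) = 0" using mtot True by (simp add: emeasure_eq_measure)
    then have "AE x in \<mu>. f x = 0" by (intro AE_I'[where N="space \<mu>"]) auto
    then have I0: "(\<integral>x. f x \<partial>\<mu>) = 0" by (rule integral_eq_zero_AE)
    show ?thesis unfolding RS_has_integral_def I0
    proof (intro allI impI exI[of _ 1] conjI)
      fix \<epsilon> :: real and n x t assume e: "0 < \<epsilon>" and P: "x 0 = c \<and> x n = d \<and>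
         (\<forall>i<n. x i < x (Suc i) \<and> x (Suc i) - x i < 1 \<and> x i \<le> t i \<and> t i \<le> x (Suc i))"
      have "n = 0"
      proof (rule ccontr)
        assume "n \<noteq> 0"
        then have "x 0 < x 1" using P by auto
        also have "x 1 \<le> x n" using part_mono[of n x 1 n] P \<open>n \<noteq> 0\<close> by auto
        finally show False using P True by simp
      qed
      then show "\<bar>(\<Sum>i<n. f (t i) * (F (x (Suc i)) - F (x i))) - 0\<bar> < \<epsilon>" using e by simp
    qed simp
  next
    case False
    then have cd': "c < d" using cd by simp
    show ?thesis unfolding RS_has_integral_def
    proof (intro allI impI)
      fix \<epsilon> :: real assume e: "0 < \<epsilon>"
      define \<eta> where "\<eta> = \<epsilon> / (2 * (F d - F c) + 2)"
      have Fcd: "F c \<le> F d" using mono cd by (auto simp: mono_on_def)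
      have eta: "0 < \<eta>" unfolding \<eta>_def using e Fcd by (intro divide_pos_pos) auto
      have eta2: "2 * \<eta> * (F d - F c) < \<epsilon>"
      proof -
        have "2 * \<eta> * (F d - F c) = \<epsilon> * (2 * (F d - F c)) / (2 * (F d - F c) + 2)"
          unfolding \<eta>_def by (simp add: field_simps)
        also have "\<dots> < \<epsilon>" using e Fcd by (simp add: field_simps)
        finally show ?thesis .
      qed
      obtain \<delta>0 where d0: "\<delta>0 > 0" and uc: "\<And>u v. u \<in> {c..d} \<Longrightarrow> v \<in> {c..d} \<Longrightarrow> \<bar>u - v\<bar> < \<delta>0 \<Longrightarrow> \<bar>f u - f v\<bar> < \<eta>"
        using compact_uniformly_continuous[OF fc compact_Icc] eta
        unfolding uniformly_continuous_on_def dist_real_def by metis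
      show "\<exists>\<delta>>0. \<forall>n x t. x 0 = c \<and> x n = d \<and> (\<forall>i<n. x i < x (Suc i) \<and> x (Suc i) - x i < \<delta> \<and> x i \<le> t i \<and> t i \<le> x (Suc i)) \<longrightarrow>
            \<bar>(\<Sum>i<n. f (t i) * (F (x (Suc i)) - F (x i))) - (\<integral>x. f x \<partial>\<mu>)\<bar> < \<epsilon>"
      proof (intro exI[of _ "\<delta>0/2"] conjI allI impI)
        show "\<delta>0/2 > 0" using d0 by simp
        fix n x t assume P: "x 0 = c \<and> x n = d \<and> (\<forall>i<n. x i < x (Suc i) \<and> x (Suc i) - x i < \<delta>0/2 \<and> x i \<le> t i \<and> t i \<le> x (Suc i))"
        have x0: "x 0 = c" and xn: "x n = d" using P by auto
        have inc: "\<forall>i<n. x i < x (Suc i)" using P by auto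
        have step: "\<And>i. i < n \<Longrightarrow> x (Suc i) - x i < \<delta>0/2 \<and> x i \<le> t i \<and> t i \<le> x (Suc i)" using P by auto
        have "n \<noteq> 0" using x0 xn cd' by (cases n) auto
        then obtain m where nm: "n = Suc m" by (cases n) auto
        have xin: "x i \<in> {c..d}" if "i \<le> n" for i
          using part_mono[OF inc, of 0 i] part_mono[OF inc, of i n] that x0 xn by auto
        have tin: "t i \<in> {c..d}" if "i < n" for i
          using xin[of i] xin[of "Suc i"] step[OF that] that by auto
        define s where "s u = (\<Sum>i<n. f (t i) * indicator {x i<..x (Suc i)} u) + f (t 0) * indicator {c} u" for u
        have Ioc_sets: "{x i<..x (Suc i)} \<in> sets \<mu>" if "i < n" for i
          using xin[of i] xin[of "Suc i"] that by (intro meas) auto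
        have c_sets: "{c} \<in> sets \<mu>" using cd by (intro meas) auto
        have ii: "integrable \<mu> (\<lambda>u. f (t i) * indicator {x i<..x (Suc i)} u)" if "i \<in> {..<n}" for i
          using Ioc_sets that by (auto intro!: integrable_mult_right integrable_real_indicator simp: emeasure_eq_measure)
        have i1: "integrable \<mu> (\<lambda>u. \<Sum>i<n. f (t i) * indicator {x i<..x (Suc i)} u)"
          by (rule Bochner_Integration.integrable_sum[OF ii])
        have i2: "integrable \<mu> (\<lambda>u. f (t 0) * indicator {c} u)"
          using c_sets by (auto intro!: integrable_mult_right integrable_real_indicator simp: emeasure_eq_measure)
        have sint: "integrable \<mu> s" unfolding s_def by (rule Bochner_Integration.integrable_add[OF i1 i2])
        have Is: "(\<integral>u. s u \<partial>\<mu>) = (\<Sum>i<n. f (t i) * (?R (x (Suc i)) - ?R (x i))) + f (t 0) * (?R c - F c)"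
        proof -
          have "(\<integral>u. s u \<partial>\<mu>) = (\<Sum>i<n. f (t i) * measure \<mu> {x i<..x (Suc i)}) + f (t 0) * measure \<mu> {c}"
          proof -
            have "(\<integral>u. s u \<partial>\<mu>) = (\<integral>u. (\<Sum>i<n. f (t i) * indicator {x i<..x (Suc i)} u) \<partial>\<mu>) + (\<integral>u. f (t 0) * indicator {c} u \<partial>\<mu>)"
              unfolding s_def by (rule Bochner_Integration.integral_add[OF i1 i2])
            also have "(\<integral>u. (\<Sum>i<n. f (t i) * indicator {x i<..x (Suc i)} u) \<partial>\<mu>) = (\<Sum>i<n. (\<integral>u. f (t i) * indicator {x i<..x (Suc i)} u \<partial>\<mu>))"
              by (rule Bochner_Integration.integral_sum[OF ii])
            also have "\<dots> = (\<Sum>i<n. f (t i) * measure \<mu> {x i<..x (Suc i)})"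
            proof (intro sum.cong refl)
              fix i assume "i \<in> {..<n}"
              then have "{x i<..x (Suc i)} \<inter> space \<mu> = {x i<..x (Suc i)}" using xin[of i] xin[of "Suc i"] sp by auto
              then show "(\<integral>u. f (t i) * indicator {x i<..x (Suc i)} u \<partial>\<mu>) = f (t i) * measure \<mu> {x i<..x (Suc i)}"
                by simp
            qed
            also have "(\<integral>u. f (t 0) * indicator {c} u \<partial>\<mu>) = f (t 0) * measure \<mu> {c}"
              using sp cd by simp
            finally show ?thesis .
          qed
          also have "(\<Sum>i<n. f (t i) * measure \<mu> {x i<..x (Suc i)}) = (\<Sum>i<n. f (t i) * (?R (x (Suc i)) - ?R (x i)))"
            using xin inc by (intro sum.cong refl) (subst mIoc, auto)
          finally show ?thesis using mpt by simp
        qed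
        have pou: "(\<Sum>i<n. indicator {x i<..x (Suc i)} u) + indicator {c} u = (1::real)" if u: "u \<in> {c..d}" for u
          using part_indicator_sum[OF inc, of u] x0 xn u by (auto simp: indicator_def)
        have close: "\<bar>f u - s u\<bar> \<le> \<eta>" if u: "u \<in> {c..d}" for u
        proof -
          have "f u - s u = (\<Sum>i<n. (f u - f (t i)) * indicator {x i<..x (Suc i)} u) + (f u - f (t 0)) * indicator {c} u"
          proof -
            have "f u = f u * ((\<Sum>i<n. indicator {x i<..x (Suc i)} u) + indicator {c} u)" using pou[OF u] by simp
            then show ?thesis unfolding s_def by (simp add: algebra_simps sum_distrib_left sum_subtractf)
          qed
          also have "\<bar>\<dots>\<bar> \<le> (\<Sum>i<n. \<bar>(f u - f (t i)) * indicator {x i<..x (Suc i)} u\<bar>) + \<bar>(f u - f (t 0)) * indicator {c} u\<bar>"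
            by (rule order_trans[OF abs_triangle_ineq add_right_mono[OF sum_abs]])
          also have "\<dots> \<le> (\<Sum>i<n. \<eta> * indicator {x i<..x (Suc i)} u) + \<eta> * indicator {c} u"
          proof (intro add_mono sum_mono)
            fix i assume i: "i \<in> {..<n}"
            show "\<bar>(f u - f (t i)) * indicator {x i<..x (Suc i)} u\<bar> \<le> \<eta> * indicator {x i<..x (Suc i)} u"
            proof (cases "u \<in> {x i<..x (Suc i)}")
              case True
              then have "\<bar>u - t i\<bar> < \<delta>0" using step[of i] i d0 by auto
              then have "\<bar>f u - f (t i)\<bar> < \<eta>" using uc[OF u tin[of i]] i by auto
              then show ?thesis using True by simp
            qed simp
          next
            show "\<bar>(f u - f (t 0)) * indicator {c} u\<bar> \<le> \<eta> * indicator {c} u"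
            proof (cases "u = c")
              case True
              then have "\<bar>u - t 0\<bar> < \<delta>0" using step[of 0] nm x0 d0 by auto
              then have "\<bar>f u - f (t 0)\<bar> < \<eta>" using uc[OF u tin[of 0]] nm by auto
              then show ?thesis using True by simp
            qed simp
          qed
          also have "\<dots> = \<eta> * ((\<Sum>i<n. indicator {x i<..x (Suc i)} u) + indicator {c} u)"
            by (simp add: sum_distrib_left algebra_simps)
          also have "\<dots> = \<eta>" using pou[OF u] by simp
          finally show ?thesis .
        qed
        have err1: "\<bar>(\<integral>u. f u \<partial>\<mu>) - (\<integral>u. s u \<partial>\<mu>)\<bar> \<le> \<eta> * (F d - F c)"
        proof -
          have "\<bar>(\<integral>u. f u - s u \<partial>\<mu>)\<bar> \<le> (\<integral>u. \<eta> \<partial>\<mu>)"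
            using fint sint close sp by (intro integral_abs_bound_integral) auto
          also have "\<dots> = \<eta> * (F d - F c)" using mtot by simp
          finally show ?thesis using fint sint by simp
        qed
        define E where "E i = F (x i) - ?R (x i)" for i
        define ft where "ft i = f (t i)" for i
        have E0: "E 0 = F c - ?R c" and En: "E n = 0" using x0 xn Rd by (auto simp: E_def)
        have RSdiff: "(\<Sum>i<n. f (t i) * (F (x (Suc i)) - F (x i))) - (\<integral>u. s u \<partial>\<mu>)
             = (\<Sum>i<m. (ft i - ft (Suc i)) * E (Suc i))"
        proof -
          have "(\<Sum>i<n. f (t i) * (F (x (Suc i)) - F (x i))) - (\<Sum>i<n. f (t i) * (?R (x (Suc i)) - ?R (x i)))
              = (\<Sum>i<n. ft i * (E (Suc i) - E i))"
            unfolding sum_subtractf[symmetric] by (intro sum.cong refl) (simp add: E_def ft_def algebra_simps)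
          also have "\<dots> = ft m * E (Suc m) - ft 0 * E 0 + (\<Sum>i<m. (ft i - ft (Suc i)) * E (Suc i))"
            unfolding nm by (rule abel_sum')
          finally show ?thesis using En E0 nm Is by (simp add: ft_def algebra_simps)
        qed
        have err2: "\<bar>\<Sum>i<m. (ft i - ft (Suc i)) * E (Suc i)\<bar> \<le> \<eta> * (F d - F c)"
        proof -
          have "\<bar>\<Sum>i<m. (ft i - ft (Suc i)) * E (Suc i)\<bar> \<le> (\<Sum>i<m. \<bar>(ft i - ft (Suc i)) * E (Suc i)\<bar>)"
            by (rule sum_abs)
          also have "\<dots> \<le> (\<Sum>i<m. \<eta> * (F (x (Suc (Suc i))) - F (x (Suc i))))"
          proof (rule sum_mono)
            fix i assume i: "i \<in> {..<m}"
            have "\<bar>t i - t (Suc i)\<bar> < \<delta>0" using step[of i] step[of "Suc i"] i nm by auto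
            then have f1: "\<bar>ft i - ft (Suc i)\<bar> \<le> \<eta>" unfolding ft_def using uc[OF tin[of i] tin[of "Suc i"]] i nm by force
            have x1: "x (Suc i) \<in> {c..d}" "x (Suc i) < x (Suc (Suc i))" "x (Suc (Suc i)) \<le> d"
              using xin[of "Suc i"] xin[of "Suc (Suc i)"] inc i nm by auto
            have "F (x (Suc i)) \<le> ?R (x (Suc i))" using right_lim_bounds(1)[OF mono] x1 by auto
            moreover have "?R (x (Suc i)) \<le> F (x (Suc (Suc i)))" using right_lim_bounds(2)[OF mono] x1 by auto
            ultimately have e1: "\<bar>E (Suc i)\<bar> \<le> F (x (Suc (Suc i))) - F (x (Suc i))" unfolding E_def by simp
            show "\<bar>(ft i - ft (Suc i)) * E (Suc i)\<bar> \<le> \<eta> * (F (x (Suc (Suc i))) - F (x (Suc i)))"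
              unfolding abs_mult by (rule mult_mono[OF f1 e1]) (use eta in auto)
          qed
          also have "\<dots> = \<eta> * (F (x n) - F (x 1))"
            unfolding sum_distrib_left[symmetric] nm using sum_lessThan_telescope[of "\<lambda>i. F (x (Suc i))" m] by simp
          also have "\<dots> \<le> \<eta> * (F d - F c)"
          proof -
            have "F c \<le> F (x 1)" using mono xin[of 1] nm by (auto simp: mono_on_def)
            then show ?thesis using xn eta by (intro mult_left_mono) auto
          qed
          finally show ?thesis .
        qed
        have "\<bar>(\<Sum>i<n. f (t i) * (F (x (Suc i)) - F (x i))) - (\<integral>x. f x \<partial>\<mu>)\<bar>
             \<le> \<bar>(\<Sum>i<n. f (t i) * (F (x (Suc i)) - F (x i))) - (\<integral>u. s u \<partial>\<mu>)\<bar> + \<bar>(\<integral>u. f u \<partial>\<mu>) - (\<integral>u. s u \<partial>\<mu>)\<bar>"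
          by linarith
        also have "\<dots> \<le> 2 * \<eta> * (F d - F c)" using err1 err2 RSdiff by simp
        finally show "\<bar>(\<Sum>i<n. f (t i) * (F (x (Suc i)) - F (x i))) - (\<integral>x. f x \<partial>\<mu>)\<bar> < \<epsilon>" using eta2 by linarith
      qed
    qed
  qed
qed


lemma RS_unique:
  assumes I: "RS_has_integral f F c d I" and J: "RS_has_integral f F c d J" and cd: "c \<le> d"
  shows "I = J"
proof -
  have *: "\<bar>I - J\<bar> < 2 * \<epsilon>" if e: "\<epsilon> > 0" for \<epsilon>
  proof -
    from I[unfolded RS_has_integral_def, rule_format, OF e] obtain \<delta>1 where d1: "\<delta>1 > 0" and P1: "\<forall>n x t. x 0 = c \<and> x n = d \<and>
         (\<forall>i<n. x i < x (Suc i) \<and> x (Suc i) - x i < \<delta>1 \<and> x i \<le> t i \<and> t i \<le> x (Suc i))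
        \<longrightarrow> \<bar>(\<Sum>i<n. f (t i) * (F (x (Suc i)) - F (x i))) - I\<bar> < \<epsilon>" by blast
    from J[unfolded RS_has_integral_def, rule_format, OF e] obtain \<delta>2 where d2: "\<delta>2 > 0" and P2: "\<forall>n x t. x 0 = c \<and> x n = d \<and>
         (\<forall>i<n. x i < x (Suc i) \<and> x (Suc i) - x i < \<delta>2 \<and> x i \<le> t i \<and> t i \<le> x (Suc i))
        \<longrightarrow> \<bar>(\<Sum>i<n. f (t i) * (F (x (Suc i)) - F (x i))) - J\<bar> < \<epsilon>" by blast
    show ?thesis
    proof (cases "c = d")
      case True
      have "\<bar>(\<Sum>i<(0::nat). f ((\<lambda>_. c) i) * (F ((\<lambda>_. c) (Suc i)) - F ((\<lambda>_. c) i))) - I\<bar> < \<epsilon>"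
        by (rule P1[rule_format]) (use True in auto)
      moreover have "\<bar>(\<Sum>i<(0::nat). f ((\<lambda>_. c) i) * (F ((\<lambda>_. c) (Suc i)) - F ((\<lambda>_. c) i))) - J\<bar> < \<epsilon>"
        by (rule P2[rule_format]) (use True in auto)
      ultimately show ?thesis by simp
    next
      case False
      then have cd': "c < d" using cd by simp
      let ?\<delta> = "min \<delta>1 \<delta>2"
      obtain n :: nat where n: "(d - c) / ?\<delta> < n" using reals_Archimedean2 by blast
      have dpos: "?\<delta> > 0" using d1 d2 by simp
      have npos: "n > 0" using n cd' dpos by (cases n) (auto simp: field_simps)
      have h1: "d - c < n * ?\<delta>" using n dpos by (simp add: divide_less_eq mult.commute)
      have h: "(d - c) / n < ?\<delta>" using h1 npos by (subst divide_less_eq) (auto simp: mult.commute)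
      define x where "x i = c + real i * ((d - c) / n)" for i
      have hpos: "(d - c) / n > 0" using cd' npos by simp
      have cond: "\<And>\<delta>. ?\<delta> \<le> \<delta> \<Longrightarrow> x 0 = c \<and> x n = d \<and> (\<forall>i<n. x i < x (Suc i) \<and> x (Suc i) - x i < \<delta> \<and> x i \<le> x i \<and> x i \<le> x (Suc i))"
      proof -
        fix \<delta> assume "?\<delta> \<le> \<delta>"
        have diff: "x (Suc i) = x i + (d - c) / n" for i unfolding x_def by (simp add: distrib_right add_divide_distrib)
        have xn: "x n = d" unfolding x_def using npos by simp
        have x0: "x 0 = c" unfolding x_def by simp
        have hd: "(d - c) / n < \<delta>" using h \<open>?\<delta> \<le> \<delta>\<close> by linarith
        show "x 0 = c \<and> x n = d \<and> (\<forall>i<n. x i < x (Suc i) \<and> x (Suc i) - x i < \<delta> \<and> x i \<le> x i \<and> x i \<le> x (Suc i))"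
          using hd hpos by (simp add: diff x0 xn)
      qed
      have "\<bar>(\<Sum>i<n. f (x i) * (F (x (Suc i)) - F (x i))) - I\<bar> < \<epsilon>" by (rule P1[rule_format]) (rule cond, simp)
      moreover have "\<bar>(\<Sum>i<n. f (x i) * (F (x (Suc i)) - F (x i))) - J\<bar> < \<epsilon>" by (rule P2[rule_format]) (rule cond, simp)
      ultimately show ?thesis by linarith
    qed
  qed
  show ?thesis
  proof (rule ccontr)
    assume "I \<noteq> J"
    then have "\<bar>I - J\<bar> / 4 > 0" by simp
    from *[OF this] show False by simp
  qed
qed

lemma cdf_unique:
  fixes \<mu> \<nu> :: "real measure"
  assumes sm: "sets \<mu> = sets (restrict_space borel {c..d})" and sn: "sets \<nu> = sets (restrict_space borel {c..d})"
    and fm: "finite_measure \<mu>" and fn: "finite_measure \<nu>" and cd: "c \<le> d"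
    and eq: "\<forall>s\<in>{c..d}. measure \<mu> {c..s} = measure \<nu> {c..s}"
  shows "\<mu> = \<nu>"
proof -
  let ?E = "range (\<lambda>s. {c..d} \<inter> {..s::real})"
  have S: "sets (restrict_space borel {c..d}) = sigma_sets {c..d} ?E"
  proof -
    have "sets (restrict_space borel {c..d}) = (\<inter>) {c..d} ` sets (borel :: real measure)"
      by (rule sets_restrict_space)
    also have "sets (borel :: real measure) = sigma_sets UNIV (range atMost)"
      by (subst borel_eq_atMost) simp
    also have "(\<inter>) {c..d} ` sigma_sets UNIV (range atMost) = sigma_sets {c..d} ((\<inter>) {c..d} ` range atMost)"
    proof (rule sigma_sets_Int)
      have "{c..d} \<in> sets (borel :: real measure)" by simp
      then show "{c..d} \<in> sigma_sets UNIV (range (atMost :: real \<Rightarrow> real set))"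
        by (subst (asm) borel_eq_atMost) simp
    qed simp
    also have "(\<inter>) {c..d} ` range atMost = ?E" by (simp only: image_image)
    finally show ?thesis .
  qed
  show ?thesis
  proof (rule measure_eqI_generator_eq[where E = ?E and \<Omega> = "{c..d}" and A = "\<lambda>_. {c..d}"])
    show "Int_stable ?E"
      unfolding Int_stable_def
    proof (intro ballI)
      fix A B assume "A \<in> ?E" "B \<in> ?E"
      then obtain s t where "A = {c..d} \<inter> {..s}" "B = {c..d} \<inter> {..t}" by auto
      then have "A \<inter> B = {c..d} \<inter> {..min s t}" by auto
      then show "A \<inter> B \<in> ?E" by blast
    qed
    show "?E \<subseteq> Pow {c..d}" by auto
    fix X assume "X \<in> ?E"
    then obtain s where X: "X = {c..d} \<inter> {..s}" by auto
    show "emeasure \<mu> X = emeasure \<nu> X"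
    proof (cases "s < c")
      case True then have "X = {}" using X by auto
      then show ?thesis by simp
    next
      case False
      then have "X = {c..min s d}" "min s d \<in> {c..d}" using X cd by auto
      then show ?thesis unfolding finite_measure.emeasure_eq_measure[OF fm] finite_measure.emeasure_eq_measure[OF fn]
        using eq by simp
    qed
  next
    show "sets \<mu> = sigma_sets {c..d} ?E" using sm S by simp
    show "sets \<nu> = sigma_sets {c..d} ?E" using sn S by simp
    show "range (\<lambda>_. {c..d}) \<subseteq> ?E" by (auto intro!: image_eqI[of _ _ d])
    show "(\<Union>i::nat. {c..d}) = {c..d}" by simp
    show "\<And>i. emeasure \<mu> {c..d} \<noteq> \<infinity>" using finite_measure.emeasure_finite[OF fm] by simp
  qed
qed


lemma cont_determines:
  fixes \<mu> \<nu> :: "real measure"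
  assumes sm: "sets \<mu> = sets (restrict_space borel {c..d})" and sn: "sets \<nu> = sets (restrict_space borel {c..d})"
    and fm: "finite_measure \<mu>" and fn: "finite_measure \<nu>" and cd: "c \<le> d"
    and eq: "\<And>f :: real \<Rightarrow> real. continuous_on {c..d} f \<Longrightarrow> (\<integral>x. f x \<partial>\<mu>) = (\<integral>x. f x \<partial>\<nu>)"
  shows "\<mu> = \<nu>"
proof (rule cdf_unique[OF sm sn fm fn cd], intro ballI)
  fix s assume s: "s \<in> {c..d}"
  define g where "g k u = max 0 (min 1 (1 - (real k + 1) * (u - s)))" for k :: nat and u :: real
  have gc: "continuous_on UNIV (g k)" for k unfolding g_def by (intro continuous_intros)
  have glim: "(\<lambda>k. g k u) \<longlonglongrightarrow> indicator {..s} u" for u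
  proof (cases "u \<le> s")
    case True
    have "g k u = 1" for k
    proof -
      have "(real k + 1) * (u - s) \<le> 0" using True by (intro mult_nonneg_nonpos) auto
      then show ?thesis unfolding g_def by auto
    qed
    then show ?thesis using True by simp
  next
    case False
    obtain N :: nat where N: "1 / (u - s) < N" using reals_Archimedean2 by blast
    have "g k u = 0" if "k \<ge> N" for k
    proof -
      have "1 < real N * (u - s)" using N False by (simp add: field_simps)
      also have "\<dots> \<le> (real k + 1) * (u - s)" using that False by (intro mult_right_mono) auto
      finally show ?thesis unfolding g_def by auto
    qed
    then have "eventually (\<lambda>k. g k u = 0) sequentially" by (auto simp: eventually_sequentially)
    then show ?thesis using False by (simp add: tendsto_eventually)
  qed
  have lim: "(\<lambda>k. \<integral>u. g k u \<partial>M) \<longlonglongrightarrow> measure M {c..s}"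
    if sM: "sets M = sets (restrict_space borel {c..d})" and fM: "finite_measure M" for M :: "real measure"
  proof -
    interpret finite_measure M by (rule fM)
    have sp: "space M = {c..d}" using sets_eq_imp_space_eq[OF sM] by (simp add: space_restrict_space)
    have meas: "h \<in> borel_measurable M" if "h \<in> borel_measurable borel" for h :: "real \<Rightarrow> real"
      by (subst measurable_cong_sets[OF sM refl]) (rule measurable_restrict_space1[OF that])
    have "(\<lambda>k. \<integral>u. g k u \<partial>M) \<longlonglongrightarrow> (\<integral>u. indicator {..s} u \<partial>M)"
    proof (rule integral_dominated_convergence[where w="\<lambda>_. 1"])
      show "(indicator {..s} :: real \<Rightarrow> real) \<in> borel_measurable M" by (rule meas) simp
      show "g k \<in> borel_measurable M" for k by (rule meas, rule borel_measurable_continuous_onI[OF gc])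
      show "integrable M (\<lambda>_. 1::real)" by simp
      show "AE x in M. (\<lambda>k. g k x) \<longlonglongrightarrow> indicator {..s} x" using glim by simp
      show "AE x in M. norm (g k x) \<le> 1" for k by (simp add: g_def)
    qed
    also have "(\<integral>u. indicator {..s} u \<partial>M) = measure M {c..s}"
    proof -
      have "{..s} \<inter> space M = {c..s}" using sp s by auto
      then show ?thesis by simp
    qed
    finally show ?thesis .
  qed
  have "(\<lambda>k. \<integral>u. g k u \<partial>\<mu>) = (\<lambda>k. \<integral>u. g k u \<partial>\<nu>)"
  proof
    fix k
    have "continuous_on {c..d} (g k)" using continuous_on_subset[OF gc] by blast
    then show "(\<integral>u. g k u \<partial>\<mu>) = (\<integral>u. g k u \<partial>\<nu>)" by (rule eq)
  qed
  then show "measure \<mu> {c..s} = measure \<nu> {c..s}"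
    using lim[OF sm fm] lim[OF sn fn] LIMSEQ_unique by metis
qed

lemma LS_measure_props:
  fixes F :: "real \<Rightarrow> real"
  assumes mono: "mono_on {c..d} F" and cd: "c \<le> d"
  shows "sets (LS_measure c d F) = sets (restrict_space borel {c..d})"
    and "finite_measure (LS_measure c d F)"
    and "\<And>s. s \<in> {c..d} \<Longrightarrow> measure (LS_measure c d F) {c..s} = right_lim d F s - F c"
proof -
  obtain \<mu> where sm: "sets \<mu> = sets (restrict_space borel {c..d})" and fm: "finite_measure \<mu>"
    and cdf: "\<forall>s\<in>{c..d}. measure \<mu> {c..s} = right_lim d F s - F c"
    using LS_exists_cdf[OF mono cd] by blast
  have RS: "\<forall>f. continuous_on {c..d} f \<longrightarrow> RS_has_integral f F c d (\<integral>x. f x \<partial>\<mu>)"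
    using RS_from_cdf[OF mono cd sm fm cdf] by blast
  have "LS_measure c d F = \<mu>"
    unfolding LS_measure_def
  proof (rule the_equality)
    show "sets \<mu> = sets (restrict_space borel {c..d}) \<and> finite_measure \<mu> \<and>
      (\<forall>f. continuous_on {c..d} f \<longrightarrow> RS_has_integral f F c d (\<integral>x. f x \<partial>\<mu>))" using sm fm RS by blast
    fix \<nu> assume H: "sets \<nu> = sets (restrict_space borel {c..d}) \<and> finite_measure \<nu> \<and>
      (\<forall>f. continuous_on {c..d} f \<longrightarrow> RS_has_integral f F c d (\<integral>x. f x \<partial>\<nu>))"
    show "\<nu> = \<mu>"
    proof (rule cont_determines[of _ c d])
      fix f :: "real \<Rightarrow> real" assume "continuous_on {c..d} f"
      then show "(\<integral>x. f x \<partial>\<nu>) = (\<integral>x. f x \<partial>\<mu>)" using H RS RS_unique cd by blast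
    qed (use H sm fm cd in auto)
  qed
  then show "sets (LS_measure c d F) = sets (restrict_space borel {c..d})"
    and "finite_measure (LS_measure c d F)"
    and "\<And>s. s \<in> {c..d} \<Longrightarrow> measure (LS_measure c d F) {c..s} = right_lim d F s - F c"
    using sm fm cdf by auto
qed


lemma sum_measure_ex:
  fixes A B :: "'a measure"
  assumes sB: "sets B = sets A" and fA: "finite_measure A" and fB: "finite_measure B"
  shows "\<exists>C. sets C = sets A \<and> finite_measure C \<and> (\<forall>S\<in>sets A. emeasure C S = emeasure A S + emeasure B S)
           \<and> (\<forall>f::'a \<Rightarrow> real. integrable A f \<longrightarrow> integrable B f \<longrightarrow> integrable C f \<and> integral\<^sup>L C f = integral\<^sup>L A f + integral\<^sup>L B f)"
proof -
  have spB: "space B = space A" using sets_eq_imp_space_eq[OF sB] .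
  define C where "C = measure_of (space A) (sets A) (\<lambda>S. emeasure A S + emeasure B S)"
  have sC: "sets C = sets A" unfolding C_def by simp
  have spC: "space C = space A" unfolding C_def by simp
  have sa: "sigma_algebra (space A) (sets A)" using measure_space[of A] by (simp add: measure_space_def)
  have eC: "emeasure C S = emeasure A S + emeasure B S" if "S \<in> sets A" for S
    unfolding C_def
  proof (rule emeasure_measure_of_sigma[OF sa _ _ that])
    show "positive (sets A) (\<lambda>S. emeasure A S + emeasure B S)" by (simp add: positive_def)
    show "countably_additive (sets A) (\<lambda>S. emeasure A S + emeasure B S)"
      unfolding countably_additive_def
    proof (intro allI impI)
      fix F :: "nat \<Rightarrow> 'a set" assume F: "range F \<subseteq> sets A" "disjoint_family F"
      have FB: "range F \<subseteq> sets B" using F sB by simp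
      have "(\<Sum>i. emeasure A (F i) + emeasure B (F i)) = (\<Sum>i. emeasure A (F i)) + (\<Sum>i. emeasure B (F i))"
        by (rule suminf_add[symmetric]) auto
      also have "\<dots> = emeasure A (\<Union>i. F i) + emeasure B (\<Union>i. F i)"
        using suminf_emeasure[OF F] suminf_emeasure[OF FB F(2)] by simp
      finally show "(\<Sum>i. emeasure A (F i) + emeasure B (F i)) = emeasure A (\<Union>(range F)) + emeasure B (\<Union>(range F))" .
    qed
  qed
  have fC: "finite_measure C"
  proof
    show "emeasure C (space C) \<noteq> \<infinity>" unfolding spC using eC[of "space A"] spB
      finite_measure.emeasure_finite[OF fA] finite_measure.emeasure_finite[OF fB] by (simp add: ennreal_add_eq_top)
  qed
  have mC: "borel_measurable C = borel_measurable A" by (rule measurable_cong_sets[OF sC refl])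
  have mB: "borel_measurable B = borel_measurable A" by (rule measurable_cong_sets[OF sB refl])
  have nn: "(\<integral>\<^sup>+x. u x \<partial>C) = (\<integral>\<^sup>+x. u x \<partial>A) + (\<integral>\<^sup>+x. u x \<partial>B)" if u: "u \<in> borel_measurable A" for u :: "'a \<Rightarrow> ennreal"
    using u
  proof (induct rule: borel_measurable_induct)
    case (cong f g)
    have "(\<integral>\<^sup>+x. f x \<partial>C) = (\<integral>\<^sup>+x. g x \<partial>C)" using cong spC by (intro nn_integral_cong) auto
    moreover have "(\<integral>\<^sup>+x. f x \<partial>A) = (\<integral>\<^sup>+x. g x \<partial>A)" using cong by (intro nn_integral_cong) auto
    moreover have "(\<integral>\<^sup>+x. f x \<partial>B) = (\<integral>\<^sup>+x. g x \<partial>B)" using cong spB by (intro nn_integral_cong) auto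
    ultimately show ?case using cong by simp
  next
    case (set S)
    then show ?case using eC sC sB by simp
  next
    case (mult u c)
    have "(\<integral>\<^sup>+x. c * u x \<partial>C) = c * (\<integral>\<^sup>+x. u x \<partial>C)" using mult mC by (intro nn_integral_cmult) auto
    moreover have "(\<integral>\<^sup>+x. c * u x \<partial>A) = c * (\<integral>\<^sup>+x. u x \<partial>A)" using mult by (intro nn_integral_cmult) auto
    moreover have "(\<integral>\<^sup>+x. c * u x \<partial>B) = c * (\<integral>\<^sup>+x. u x \<partial>B)" using mult mB by (intro nn_integral_cmult) auto
    ultimately show ?case using mult by (simp add: distrib_left)
  next
    case (add u v)
    have "(\<integral>\<^sup>+x. v x + u x \<partial>C) = (\<integral>\<^sup>+x. v x \<partial>C) + (\<integral>\<^sup>+x. u x \<partial>C)" using add mC by (intro nn_integral_add) auto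
    moreover have "(\<integral>\<^sup>+x. v x + u x \<partial>A) = (\<integral>\<^sup>+x. v x \<partial>A) + (\<integral>\<^sup>+x. u x \<partial>A)" using add by (intro nn_integral_add) auto
    moreover have "(\<integral>\<^sup>+x. v x + u x \<partial>B) = (\<integral>\<^sup>+x. v x \<partial>B) + (\<integral>\<^sup>+x. u x \<partial>B)" using add mB by (intro nn_integral_add) auto
    ultimately show ?case using add by (simp add: ac_simps)
  next
    case (seq U)
    have UC: "(\<integral>\<^sup>+x. (SUP i. U i) x \<partial>M) = (SUP i. (\<integral>\<^sup>+x. U i x \<partial>M))"
      if "\<And>i. U i \<in> borel_measurable M" for M
      using nn_integral_monotone_convergence_SUP[OF seq(4) that] by (simp add: image_image)
    have inc: "incseq (\<lambda>i. (\<integral>\<^sup>+x. U i x \<partial>M))" for M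
      using seq(4) by (auto simp: incseq_def le_fun_def intro!: nn_integral_mono)
    have "(\<integral>\<^sup>+x. (SUP i. U i) x \<partial>C) = (SUP i. (\<integral>\<^sup>+x. U i x \<partial>A) + (\<integral>\<^sup>+x. U i x \<partial>B))"
      using UC[of C, OF seq(1)[unfolded mC[symmetric]]] seq(3) by simp
    also have "\<dots> = (SUP i. (\<integral>\<^sup>+x. U i x \<partial>A)) + (SUP i. (\<integral>\<^sup>+x. U i x \<partial>B))"
      by (rule ennreal_SUP_add[OF inc inc])
    also have "\<dots> = (\<integral>\<^sup>+x. (SUP i. U i) x \<partial>A) + (\<integral>\<^sup>+x. (SUP i. U i) x \<partial>B)"
      using UC[of A, OF seq(1)] UC[of B, OF seq(1)[unfolded mB[symmetric]]] by simp
    finally show ?case .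
  qed
  have int: "integrable C f \<and> integral\<^sup>L C f = integral\<^sup>L A f + integral\<^sup>L B f"
    if iA: "integrable A f" and iB: "integrable B f" for f :: "'a \<Rightarrow> real"
  proof -
    have fm: "f \<in> borel_measurable A" using iA by simp
    have iC: "integrable C f"
    proof -
      have "(\<integral>\<^sup>+x. ennreal (norm (f x)) \<partial>C) = (\<integral>\<^sup>+x. ennreal (norm (f x)) \<partial>A) + (\<integral>\<^sup>+x. ennreal (norm (f x)) \<partial>B)"
        using fm by (intro nn) auto
      also have "\<dots> < \<infinity>" using iA iB by (simp add: integrable_iff_bounded ennreal_add_less_top)
      moreover have "f \<in> borel_measurable C" by (subst measurable_cong_sets[OF sC refl]) (rule fm)
      ultimately show ?thesis by (simp add: integrable_iff_bounded)
    qed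
    have p: "(\<integral>\<^sup>+x. ennreal (f x) \<partial>C) = (\<integral>\<^sup>+x. ennreal (f x) \<partial>A) + (\<integral>\<^sup>+x. ennreal (f x) \<partial>B)"
      using fm by (intro nn) auto
    have n: "(\<integral>\<^sup>+x. ennreal (- f x) \<partial>C) = (\<integral>\<^sup>+x. ennreal (- f x) \<partial>A) + (\<integral>\<^sup>+x. ennreal (- f x) \<partial>B)"
      using fm by (intro nn) auto
    have fin: "(\<integral>\<^sup>+x. ennreal (f x) \<partial>M) < \<infinity>" "(\<integral>\<^sup>+x. ennreal (- f x) \<partial>M) < \<infinity>" if "integrable M f" for M
    proof -
      have "(\<integral>\<^sup>+x. ennreal (f x) \<partial>M) \<le> (\<integral>\<^sup>+x. ennreal (norm (f x)) \<partial>M)"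
        by (intro nn_integral_mono) auto
      also have "\<dots> < \<infinity>" using that by (simp add: integrable_iff_bounded)
      finally show "(\<integral>\<^sup>+x. ennreal (f x) \<partial>M) < \<infinity>" .
      have "(\<integral>\<^sup>+x. ennreal (- f x) \<partial>M) \<le> (\<integral>\<^sup>+x. ennreal (norm (f x)) \<partial>M)"
        by (intro nn_integral_mono) auto
      also have "\<dots> < \<infinity>" using that by (simp add: integrable_iff_bounded)
      finally show "(\<integral>\<^sup>+x. ennreal (- f x) \<partial>M) < \<infinity>" .
    qed
    have "integral\<^sup>L C f = enn2real (\<integral>\<^sup>+x. ennreal (f x) \<partial>C) - enn2real (\<integral>\<^sup>+x. ennreal (- f x) \<partial>C)"
      by (rule real_lebesgue_integral_def[OF iC])
    also have "\<dots> = (enn2real (\<integral>\<^sup>+x. ennreal (f x) \<partial>A) - enn2real (\<integral>\<^sup>+x. ennreal (- f x) \<partial>A))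
        + (enn2real (\<integral>\<^sup>+x. ennreal (f x) \<partial>B) - enn2real (\<integral>\<^sup>+x. ennreal (- f x) \<partial>B))"
      unfolding p n using fin[OF iA] fin[OF iB] by (simp add: enn2real_plus)
    also have "\<dots> = integral\<^sup>L A f + integral\<^sup>L B f"
      using real_lebesgue_integral_def[OF iA] real_lebesgue_integral_def[OF iB] by simp
    finally show ?thesis using iC by simp
  qed
  show ?thesis using sC fC eC int by blast
qed


lemma atom_measure:
  fixes w Z :: "real \<Rightarrow> real" and H :: "real set"
  assumes w0: "\<And>y. y \<in> H \<Longrightarrow> 0 \<le> w y" and ws: "w summable_on H" and Z: "\<And>y. y \<in> H \<Longrightarrow> Z y \<in> {a..b}"
  defines "D \<equiv> distr (density (count_space H) (\<lambda>y. ennreal (w y))) (restrict_space borel {a..b}) Z"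
  shows "sets D = sets (restrict_space borel {a..b})" and "finite_measure D"
    and "\<And>f. f \<in> borel_measurable (restrict_space borel {a..b}) \<Longrightarrow> bounded (f ` {a..b}) \<Longrightarrow> integral\<^sup>L D f = infsum (\<lambda>y. f (Z y) * w y) H"
    and "\<And>S. S \<in> sets (restrict_space borel {a..b}) \<Longrightarrow> measure D S = infsum w {y\<in>H. Z y \<in> S}"
proof -
  have Zm: "Z \<in> measurable (count_space H) (restrict_space borel {a..b})"
    using Z by (auto simp: space_restrict_space)
  have Zm': "Z \<in> measurable (density (count_space H) (\<lambda>y. ennreal (w y))) (restrict_space borel {a..b})"
    by (subst measurable_cong_sets[OF sets_density refl]) (rule Zm)
  show sD: "sets D = sets (restrict_space borel {a..b})" unfolding D_def by simp
  have wa: "Infinite_Set_Sum.abs_summable_on w H"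
    using ws abs_summable_equivalent summable_on_iff_abs_summable_on_real by blast
  have fin: "finite_measure D"
  proof
    have "space D = {a..b}" unfolding D_def by (simp add: space_restrict_space)
    have "emeasure D (space D) = emeasure (density (count_space H) (\<lambda>y. ennreal (w y))) (Z -` space D \<inter> H)"
    proof -
      have "{a..b} \<in> sets (restrict_space borel {a..b})"
        using sets.top[of "restrict_space borel {a..b}"] by (simp add: space_restrict_space)
      then show ?thesis unfolding D_def by (subst emeasure_distr[OF Zm']) (auto simp: space_restrict_space)
    qed
    also have "Z -` space D \<inter> H = H" using Z \<open>space D = {a..b}\<close> by auto
    also have "emeasure (density (count_space H) (\<lambda>y. ennreal (w y))) H = (\<integral>\<^sup>+y. ennreal (w y) * indicator H y \<partial>count_space H)"
      by (subst emeasure_density) auto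
    also have "\<dots> = (\<integral>\<^sup>+y. ennreal (w y) \<partial>count_space H)"
      by (intro nn_integral_cong) auto
    also have "\<dots> = ennreal (infsetsum w H)"
      using nn_integral_conv_infsetsum[OF wa] w0 by simp
    finally show "emeasure D (space D) \<noteq> \<infinity>" by simp
  qed
  show "finite_measure D" by (rule fin)
  have int: "integral\<^sup>L D f = infsum (\<lambda>y. f (Z y) * w y) H" if f: "f \<in> borel_measurable (restrict_space borel {a..b})"
    and fb: "bounded (f ` {a..b})" for f
  proof -
    obtain B where B: "\<And>u. u \<in> {a..b} \<Longrightarrow> \<bar>f u\<bar> \<le> B" using fb unfolding bounded_iff by (metis image_eqI real_norm_def)
    have "integral\<^sup>L D f = integral\<^sup>L (density (count_space H) (\<lambda>y. ennreal (w y))) (\<lambda>y. f (Z y))"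
      unfolding D_def by (rule integral_distr[OF Zm' f])
    also have "\<dots> = integral\<^sup>L (density (count_space H) (\<lambda>y. ennreal (max 0 (w y)))) (\<lambda>y. f (Z y))"
    proof -
      have "density (count_space H) (\<lambda>y. ennreal (w y)) = density (count_space H) (\<lambda>y. ennreal (max 0 (w y)))"
        by (intro density_cong) (auto simp: w0 max_def)
      then show ?thesis by simp
    qed
    also have "\<dots> = (\<integral>y. max 0 (w y) *\<^sub>R f (Z y) \<partial>count_space H)"
      by (rule integral_density) auto
    also have "\<dots> = infsetsum (\<lambda>y. f (Z y) * w y) H"
      unfolding infsetsum_def by (intro Bochner_Integration.integral_cong) (auto simp: w0 max_def)
    also have "\<dots> = infsum (\<lambda>y. f (Z y) * w y) H"
    proof (rule infsetsum_infsum)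
      have "Infinite_Set_Sum.abs_summable_on (\<lambda>y. B * w y) H" using wa by auto
      then show "Infinite_Set_Sum.abs_summable_on (\<lambda>y. f (Z y) * w y) H"
      proof (rule abs_summable_on_comparison_test')
        fix y assume y: "y \<in> H"
        have "\<bar>f (Z y)\<bar> * w y \<le> B * w y" using B[OF Z[OF y]] w0[OF y] by (intro mult_right_mono) auto
        then show "norm (f (Z y) * w y) \<le> B * w y" using w0[OF y] by (simp add: abs_mult)
      qed
    qed
    finally show ?thesis .
  qed
  show "integral\<^sup>L D f = infsum (\<lambda>y. f (Z y) * w y) H" if "f \<in> borel_measurable (restrict_space borel {a..b})"
    "bounded (f ` {a..b})" for f
    using int[OF that] .
  show "measure D S = infsum w {y\<in>H. Z y \<in> S}" if S: "S \<in> sets (restrict_space borel {a..b})" for S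
  proof -
    have "measure D S = integral\<^sup>L D (indicator S)"
      using S sD finite_measure.emeasure_finite[OF fin] sets.sets_into_space[of S D]
      by (simp add: Int_absorb2)
    also have "\<dots> = infsum (\<lambda>y. indicator S (Z y) * w y) H"
    proof (rule int)
      show "indicator S \<in> borel_measurable (restrict_space borel {a..b})" using S by simp
      show "bounded (indicator S ` {a..b} :: real set)"
        by (rule bounded_subset[of "{0,1}"]) (auto simp: indicator_def)
    qed
    also have "\<dots> = infsum w {y\<in>H. Z y \<in> S}"
      by (intro infsum_cong_neutral) (auto simp: indicator_def)
    finally show ?thesis .
  qed
qed


definition Xf :: "real \<Rightarrow> real \<Rightarrow> (real \<Rightarrow> real) \<Rightarrow> real \<Rightarrow> real" where
  "Xf a b M y = Inf {x \<in> {a..b}. y \<le> M x}"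
definition Xif :: "real \<Rightarrow> real \<Rightarrow> (real \<Rightarrow> real) \<Rightarrow> real \<Rightarrow> real" where
  "Xif a b M y = Sup {x \<in> {a..b}. M x \<le> y}"
definition Hs :: "real \<Rightarrow> real \<Rightarrow> (real \<Rightarrow> real) \<Rightarrow> real set" where
  "Hs a b M = {y \<in> {M a..M b}. \<exists>x1\<in>{a..b}. \<exists>x2\<in>{a..b}. x1 \<noteq> x2 \<and> M x1 = y \<and> M x2 = y}"

context
  fixes a b :: real and M :: "real \<Rightarrow> real"
  assumes ab: "a < b" and Mm: "mono_on {a..b} M"
begin

lemma Mle: "x \<in> {a..b} \<Longrightarrow> x' \<in> {a..b} \<Longrightarrow> x \<le> x' \<Longrightarrow> M x \<le> M x'"
  using Mm by (auto simp: mono_on_def)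

lemma Mlt_imp: "x \<in> {a..b} \<Longrightarrow> x' \<in> {a..b} \<Longrightarrow> M x < M x' \<Longrightarrow> x < x'"
  using Mle[of x' x] by (cases "x' \<le> x") auto

lemma Mab: "M a \<le> M b" using Mle[of a b] ab by auto

lemma M_range: "x \<in> {a..b} \<Longrightarrow> M x \<in> {M a..M b}"
  using Mle[of a x] Mle[of x b] by auto

lemma T_ne: "y \<in> {M a..M b} \<Longrightarrow> {x \<in> {a..b}. y \<le> M x} \<noteq> {}"
  using ab by (auto intro!: exI[of _ b])
lemma U_ne: "y \<in> {M a..M b} \<Longrightarrow> {x \<in> {a..b}. M x \<le> y} \<noteq> {}"
  using ab by (auto intro!: exI[of _ a])

lemma Xf_range:
  assumes y: "y \<in> {M a..M b}" shows "Xf a b M y \<in> {a..b}"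
proof -
  have ne: "b \<in> {x \<in> {a..b}. y \<le> M x}" using y ab by auto
  have bb: "bdd_below {x \<in> {a..b}. y \<le> M x}" by (auto intro!: bdd_belowI[of _ a])
  show ?thesis unfolding Xf_def using ne bb
    by (auto intro!: cInf_lower cInf_greatest)
qed

lemma Xif_range:
  assumes y: "y \<in> {M a..M b}" shows "Xif a b M y \<in> {a..b}"
proof -
  have ne: "a \<in> {x \<in> {a..b}. M x \<le> y}" using y ab by auto
  have bb: "bdd_above {x \<in> {a..b}. M x \<le> y}" by (auto intro!: bdd_aboveI[of _ b])
  show ?thesis unfolding Xif_def using ne bb
    by (auto intro!: cSup_upper cSup_least)
qed

lemma Xf_mono: "mono_on {M a..M b} (Xf a b M)"
proof (rule mono_onI)
  fix y y' assume y: "y \<in> {M a..M b}" "y' \<in> {M a..M b}" "y \<le> y'"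
  have ne: "b \<in> {x \<in> {a..b}. y' \<le> M x}" using y ab by auto
  show "Xf a b M y \<le> Xf a b M y'" unfolding Xf_def
    using ne y by (intro cInf_superset_mono) (auto intro!: bdd_belowI[of _ a])
qed

lemma Xf_le_iff:
  assumes s: "s \<in> {a..b}" and y: "y \<in> {M a..M b}"
  shows "Xf a b M y \<le> s \<longleftrightarrow> y \<le> right_lim b M s"
proof (cases "s = b")
  case True
  then show ?thesis using Xf_range[OF y] y by (simp add: right_lim_def)
next
  case False
  then have sb: "s < b" "a \<le> s" using s by auto
  let ?T = "{x \<in> {a..b}. y \<le> M x}"
  have bbT: "bdd_below ?T" by (auto intro!: bdd_belowI[of _ a])
  have m: "right_lim b M s = Inf (M ` {s<..b})" using right_lim_tendsto(2)[OF Mm sb(2) sb(1)] .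
  have bbM: "bdd_below (M ` {s<..b})" using Mle[of s] sb by (auto intro!: bdd_belowI[of _ "M s"])
  show ?thesis
  proof
    assume X: "Xf a b M y \<le> s"
    show "y \<le> right_lim b M s"
    proof (rule ccontr)
      assume "\<not> y \<le> right_lim b M s"
      then have "Inf (M ` {s<..b}) < y" using m by simp
      then obtain x0 where x0: "x0 \<in> {s<..b}" "M x0 < y" using cInf_lessD[of "M ` {s<..b}" y] sb by auto
      have "x0 \<le> Xf a b M y" unfolding Xf_def
      proof (rule cInf_greatest)
        show "?T \<noteq> {}" using y ab by auto
        fix x assume x: "x \<in> ?T"
        then have "M x0 < M x" using x0 by auto
        then show "x0 \<le> x" using Mlt_imp[of x0 x] x x0 sb by auto
      qed
      then show False using X x0 by simp
    qed
  next
    assume ym: "y \<le> right_lim b M s"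
    have le: "Xf a b M y \<le> x" if x: "x \<in> {s<..b}" for x
    proof -
      have "Inf (M ` {s<..b}) \<le> M x" using x bbM by (intro cInf_lower) auto
      then have "x \<in> ?T" using x ym m sb by auto
      then show ?thesis unfolding Xf_def using bbT by (rule cInf_lower)
    qed
    show "Xf a b M y \<le> s"
    proof (rule ccontr)
      assume "\<not> Xf a b M y \<le> s"
      then have gt: "s < Xf a b M y" by simp
      let ?x = "min b ((s + Xf a b M y) / 2)"
      have "?x \<in> {s<..b}" using gt sb by auto
      from le[OF this] show False using gt sb by (auto simp: min_def split: if_splits)
    qed
  qed
qed

lemma Xif_le_iff:
  assumes s: "s \<in> {a..b}" and y: "y \<in> {M a..M b}"
  shows "Xif a b M y \<le> s \<longleftrightarrow> (\<forall>x\<in>{s<..b}. y < M x)"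
proof
  let ?U = "{x \<in> {a..b}. M x \<le> y}"
  have bbU: "bdd_above ?U" by (auto intro!: bdd_aboveI[of _ b])
  {
    assume X: "Xif a b M y \<le> s"
    show "\<forall>x\<in>{s<..b}. y < M x"
    proof (intro ballI)
      fix x assume x: "x \<in> {s<..b}"
      show "y < M x"
      proof (rule ccontr)
        assume "\<not> y < M x"
        then have "x \<in> ?U" using x s by auto
        then have "x \<le> Xif a b M y" unfolding Xif_def using bbU by (rule cSup_upper)
        then show False using X x by simp
      qed
    qed
  }
  {
    assume H: "\<forall>x\<in>{s<..b}. y < M x"
    show "Xif a b M y \<le> s" unfolding Xif_def
    proof (rule cSup_least)
      show "?U \<noteq> {}" using U_ne[OF y] by auto
      fix x assume x: "x \<in> ?U"
      show "x \<le> s"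
      proof (rule ccontr)
        assume "\<not> x \<le> s"
        then have "x \<in> {s<..b}" using x by auto
        then have "y < M x" using H by blast
        then show False using x by simp
      qed
    qed
  }
qed

lemma X_ne_Xi_imp_H:
  assumes y: "y \<in> {M a..M b}" and ne: "Xf a b M y \<noteq> Xif a b M y"
  shows "y \<in> Hs a b M"
proof -
  let ?T = "{x \<in> {a..b}. y \<le> M x}" and ?U = "{x \<in> {a..b}. M x \<le> y}"
  have bbT: "bdd_below ?T" by (auto intro!: bdd_belowI[of _ a])
  have bbU: "bdd_above ?U" by (auto intro!: bdd_aboveI[of _ b])
  have neT: "?T \<noteq> {}" and neU: "?U \<noteq> {}" using T_ne[OF y] U_ne[OF y] by auto
  have Xr: "Xf a b M y \<in> {a..b}" and Xir: "Xif a b M y \<in> {a..b}" using Xf_range[OF y] Xif_range[OF y] .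
  show ?thesis
  proof (cases "Xf a b M y < Xif a b M y")
    case True
    define x1 where "x1 = (2 * Xf a b M y + Xif a b M y) / 3"
    define x2 where "x2 = (Xf a b M y + 2 * Xif a b M y) / 3"
    have x12: "Xf a b M y < x1" "x1 < x2" "x2 < Xif a b M y" using True by (auto simp: x1_def x2_def)
    have inab: "x1 \<in> {a..b}" "x2 \<in> {a..b}" using x12 Xr Xir by auto
    obtain xt where xt: "xt \<in> ?T" "xt < x1" using cInf_lessD[OF neT, of x1] x12 by (auto simp: Xf_def)
    obtain xu where xu: "xu \<in> ?U" "x2 < xu" using less_cSupD[OF neU, of x2] x12 by (auto simp: Xif_def)
    have "y \<le> M x1" using xt Mle[of xt x1] inab by auto
    moreover have "M x1 \<le> M x2" using Mle[of x1 x2] inab x12 by auto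
    moreover have "M x2 \<le> y" using xu Mle[of x2 xu] inab by auto
    ultimately have "M x1 = y" "M x2 = y" by auto
    then show ?thesis unfolding Hs_def using inab x12 y by (intro CollectI conjI bexI[of _ x1] bexI[of _ x2]) auto
  next
    case False
    then have lt: "Xif a b M y < Xf a b M y" using ne by simp
    define x where "x = (Xf a b M y + Xif a b M y) / 2"
    have x: "Xif a b M y < x" "x < Xf a b M y" using lt by (auto simp: x_def)
    have xab: "x \<in> {a..b}" using x Xr Xir by auto
    have "x \<notin> ?T"
    proof
      assume "x \<in> ?T"
      then have "Xf a b M y \<le> x" unfolding Xf_def using bbT by (rule cInf_lower)
      then show False using x by simp
    qed
    moreover have "x \<notin> ?U"
    proof
      assume "x \<in> ?U"
      then have "x \<le> Xif a b M y" unfolding Xif_def using bbU by (rule cSup_upper)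
      then show False using x by simp
    qed
    ultimately show ?thesis using xab by auto
  qed
qed

lemma H_X_lt_Xi:
  assumes y: "y \<in> Hs a b M" shows "Xf a b M y < Xif a b M y"
proof -
  obtain x1 x2 where x: "x1 \<in> {a..b}" "x2 \<in> {a..b}" "x1 \<noteq> x2" "M x1 = y" "M x2 = y" and yr: "y \<in> {M a..M b}"
    using y unfolding Hs_def by auto
  have bbT: "bdd_below {x \<in> {a..b}. y \<le> M x}" by (auto intro!: bdd_belowI[of _ a])
  have bbU: "bdd_above {x \<in> {a..b}. M x \<le> y}" by (auto intro!: bdd_aboveI[of _ b])
  have "Xf a b M y \<le> min x1 x2" unfolding Xf_def using x bbT by (auto intro!: cInf_lower simp: min_def)
  moreover have "max x1 x2 \<le> Xif a b M y" unfolding Xif_def using x bbU by (auto intro!: cSup_upper simp: max_def)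
  ultimately show ?thesis using x(3) by (auto simp: min_def max_def split: if_splits)
qed

lemma H_disjoint:
  assumes y: "y \<in> Hs a b M" "y' \<in> Hs a b M" "y < y'"
  shows "Xif a b M y \<le> Xf a b M y'"
proof -
  have yr: "y \<in> {M a..M b}" "y' \<in> {M a..M b}" using y unfolding Hs_def by auto
  have neT: "{x \<in> {a..b}. y' \<le> M x} \<noteq> {}" and neU: "{x \<in> {a..b}. M x \<le> y} \<noteq> {}" using T_ne[OF yr(2)] U_ne[OF yr(1)] by auto
  show ?thesis unfolding Xif_def Xf_def
  proof (rule cSup_least[OF neU])
    fix x assume x: "x \<in> {x \<in> {a..b}. M x \<le> y}"
    show "x \<le> Inf {x \<in> {a..b}. y' \<le> M x}"
    proof (rule cInf_greatest[OF neT])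
      fix x' assume x': "x' \<in> {x \<in> {a..b}. y' \<le> M x}"
      then have "M x < M x'" using x y by auto
      then show "x \<le> x'" using Mlt_imp[of x x'] x x' by auto
    qed
  qed
qed

lemma H_countable: "countable (Hs a b M)"
proof -
  have "\<exists>q\<in>\<rat>. Xf a b M y < q \<and> q < Xif a b M y" if "y \<in> Hs a b M" for y
    using Rats_dense_in_real[OF H_X_lt_Xi[OF that]] by auto
  then obtain q where q: "\<And>y. y \<in> Hs a b M \<Longrightarrow> q y \<in> \<rat> \<and> Xf a b M y < q y \<and> q y < Xif a b M y"
    by metis
  have inj: "inj_on q (Hs a b M)"
  proof (rule inj_onI)
    fix y y' assume yy: "y \<in> Hs a b M" "y' \<in> Hs a b M" "q y = q y'"
    show "y = y'"
    proof (rule ccontr)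
      assume "y \<noteq> y'"
      then consider "y < y'" | "y' < y" by linarith
      then show False
      proof cases
        case 1
        have "q y < q y'" using q[OF yy(1)] q[OF yy(2)] H_disjoint[OF yy(1,2) 1] by linarith
        then show False using yy by simp
      next
        case 2
        have "q y' < q y" using q[OF yy(1)] q[OF yy(2)] H_disjoint[OF yy(2,1) 2] by linarith
        then show False using yy by simp
      qed
    qed
  qed
  have "q ` Hs a b M \<subseteq> \<rat>" using q by auto
  then have "countable (q ` Hs a b M)" using countable_rat countable_subset by blast
  then show ?thesis using inj countable_image_inj_on by blast
qed

end


context
  fixes c d :: real and N :: "real \<Rightarrow> real"
  assumes cd: "c \<le> d" and Nm: "mono_on {c..d} N"
begin

lemma Nle: "x \<in> {c..d} \<Longrightarrow> x' \<in> {c..d} \<Longrightarrow> x \<le> x' \<Longrightarrow> N x \<le> N x'"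
  using Nm by (auto simp: mono_on_def)

lemma jm_nonneg: "y \<in> {c..d} \<Longrightarrow> 0 \<le> N y - left_lim c N y"
  using left_lim_bounds(1)[OF Nm] by auto

lemma jp_nonneg: "y \<in> {c..d} \<Longrightarrow> 0 \<le> right_lim d N y - N y"
  using right_lim_bounds(1)[OF Nm] by auto

lemma jm_c: "N c - left_lim c N c = 0" by (simp add: left_lim_def)
lemma jp_d: "right_lim d N d - N d = 0" by (simp add: right_lim_def)

definition phi :: "real \<Rightarrow> real \<Rightarrow> real \<Rightarrow> real" where
  "phi s t y = (N y - left_lim c N y) * indicator {s<..t} y + (right_lim d N y - N y) * indicator {s..<t} y"

lemma phi_nonneg: "y \<in> {c..d} \<Longrightarrow> 0 \<le> phi s t y"
  unfolding phi_def using jm_nonneg[of y] jp_nonneg[of y] by (auto simp: indicator_def)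

lemma fin_jump_bound:
  assumes F: "finite F" "F \<subseteq> {c..d}" and s: "c \<le> s"
  shows "\<forall>t. s \<le> t \<longrightarrow> t \<le> d \<longrightarrow> (\<Sum>y\<in>F. phi s t y) \<le> N t - N s"
  using F
proof (induction F rule: finite_linorder_max_induct)
  case empty
  show ?case using Nle s by auto
next
  case (insert z F)
  have zr: "z \<in> {c..d}" and Fr: "F \<subseteq> {c..d}" using insert by auto
  have IH: "\<And>t. s \<le> t \<Longrightarrow> t \<le> d \<Longrightarrow> (\<Sum>y\<in>F. phi s t y) \<le> N t - N s" using insert Fr by auto
  have zF: "z \<notin> F" using insert by auto
  show ?case
  proof (intro allI impI)
    fix t assume t: "s \<le> t" "t \<le> d"
    have sum_ins: "(\<Sum>y\<in>insert z F. phi s t y) = phi s t z + (\<Sum>y\<in>F. phi s t y)"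
      using insert zF by simp
    show "(\<Sum>y\<in>insert z F. phi s t y) \<le> N t - N s"
    proof (cases "s \<le> z \<and> z \<le> t")
      case False
      then have "phi s t z = 0" unfolding phi_def by (auto simp: indicator_def)
      then show ?thesis using sum_ins IH[OF t] by simp
    next
      case True
      then have sz: "s \<le> z" "z \<le> t" by auto
      have SF: "(\<Sum>y\<in>F. phi s t y) \<le> (if s < z then left_lim c N z - N s else 0)"
      proof (cases "s < z")
        case False
        then have "s = z" using sz by simp
        then have "phi s t y = 0" if "y \<in> F" for y using insert that unfolding phi_def by (auto simp: indicator_def)
        then show ?thesis using False by simp
      next
        case True
        obtain u where u: "s \<le> u" "u < z" "\<And>y. y \<in> F \<Longrightarrow> y \<le> u"
        proof (cases "F = {}")
          case True then show ?thesis using that[of s] \<open>s < z\<close> by auto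
        next
          case False
          have "Max F \<in> F" using insert False by auto
          then have "Max F < z" using insert by auto
          moreover have "\<And>y. y \<in> F \<Longrightarrow> y \<le> Max F" using insert by auto
          ultimately show ?thesis using that[of "max s (Max F)"] \<open>s < z\<close> by force
        qed
        define t' where "t' = (u + z) / 2"
        have t': "s \<le> t'" "t' < z" "u < t'" using u by (auto simp: t'_def)
        have "(\<Sum>y\<in>F. phi s t y) = (\<Sum>y\<in>F. phi s t' y)"
        proof (intro sum.cong refl)
          fix y assume y: "y \<in> F"
          have "y < z" "y < t'" using insert y u(3)[OF y] t' by auto
          then show "phi s t y = phi s t' y" unfolding phi_def using sz by (auto simp: indicator_def)
        qed
        also have "\<dots> \<le> N t' - N s" using IH[of t'] t' zr sz t by auto
        also have "N t' \<le> left_lim c N z" using left_lim_bounds(2)[OF Nm, of z t'] t' zr s by auto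
        finally show ?thesis using True by simp
      qed
      have pz: "phi s t z \<le> (if s < z then N z - left_lim c N z else 0) + (if z < t then N t - N z else 0)"
      proof -
        have "right_lim d N z \<le> N t" if "z < t" using right_lim_bounds(2)[OF Nm, of z t] zr that t by auto
        then show ?thesis unfolding phi_def using sz by (auto simp: indicator_def)
      qed
      have "N s \<le> N z" "N z \<le> N t" using Nle[of s z] Nle[of z t] sz s t zr by auto
      then show ?thesis using sum_ins SF pz sz by (auto split: if_splits)
    qed
  qed
qed

lemma phi_summable_le:
  assumes H: "H \<subseteq> {c..d}" and s: "c \<le> s" "s \<le> t" "t \<le> d"
  shows "(phi s t) summable_on H" and "infsum (phi s t) H \<le> N t - N s"
proof -
  have fin: "\<And>F. finite F \<Longrightarrow> F \<subseteq> H \<Longrightarrow> sum (phi s t) F \<le> N t - N s"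
    using fin_jump_bound s H by blast
  show sm: "(phi s t) summable_on H"
    using H fin phi_nonneg by (intro nonneg_bdd_above_summable_on) (auto simp: bdd_above_def)
  show "infsum (phi s t) H \<le> N t - N s" by (rule infsum_le_finite_sums[OF sm fin])
qed

lemma jm_summable:
  assumes H: "H \<subseteq> {c..d}" shows "(\<lambda>y. N y - left_lim c N y) summable_on H"
proof (rule nonneg_bdd_above_summable_on)
  show "\<And>x. x \<in> H \<Longrightarrow> 0 \<le> N x - left_lim c N x" using H jm_nonneg by auto
  have "sum (\<lambda>y. N y - left_lim c N y) F \<le> N d - N c" if "finite F" "F \<subseteq> H" for F
  proof -
    have "sum (\<lambda>y. N y - left_lim c N y) F \<le> sum (phi c d) F"
    proof (rule sum_mono)
      fix y assume "y \<in> F"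
      then have y: "y \<in> {c..d}" using that H by auto
      show "N y - left_lim c N y \<le> phi c d y"
        using jp_nonneg[OF y] y jm_c unfolding phi_def by (cases "y = c") (auto simp: indicator_def)
    qed
    also have "\<dots> \<le> N d - N c" using fin_jump_bound[of F c] that H cd by auto
    finally show ?thesis .
  qed
  then show "bdd_above (sum (\<lambda>y. N y - left_lim c N y) ` {F. F \<subseteq> H \<and> finite F})"
    by (auto simp: bdd_above_def)
qed

lemma jp_summable:
  assumes H: "H \<subseteq> {c..d}" shows "(\<lambda>y. right_lim d N y - N y) summable_on H"
proof (rule nonneg_bdd_above_summable_on)
  show "\<And>x. x \<in> H \<Longrightarrow> 0 \<le> right_lim d N x - N x" using H jp_nonneg by auto
  have "sum (\<lambda>y. right_lim d N y - N y) F \<le> N d - N c" if "finite F" "F \<subseteq> H" for F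
  proof -
    have "sum (\<lambda>y. right_lim d N y - N y) F \<le> sum (phi c d) F"
    proof (rule sum_mono)
      fix y assume "y \<in> F"
      then have y: "y \<in> {c..d}" using that H by auto
      show "right_lim d N y - N y \<le> phi c d y"
        using jm_nonneg[OF y] y jp_d unfolding phi_def by (cases "y = d") (auto simp: indicator_def)
    qed
    also have "\<dots> \<le> N d - N c" using fin_jump_bound[of F c] that H cd by auto
    finally show ?thesis .
  qed
  then show "bdd_above (sum (\<lambda>y. right_lim d N y - N y) ` {F. F \<subseteq> H \<and> finite F})"
    by (auto simp: bdd_above_def)
qed

end


lemma infsum_indicator_restrict:
  fixes f :: "'a \<Rightarrow> real"
  shows "infsum (\<lambda>y. f y * indicator S y) H = infsum f (H \<inter> S)"
  by (intro infsum_cong_neutral) (auto simp: indicator_def)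

lemma summable_indicator_restrict:
  fixes f :: "'a \<Rightarrow> real"
  assumes "f summable_on H"
  shows "(\<lambda>y. f y * indicator S y) summable_on H"
proof -
  have "f summable_on (H \<inter> S)" using assms by (rule summable_on_subset_banach) auto
  then show ?thesis by (rule summable_on_cong_neutral[THEN iffD1, rotated -1]) (auto simp: indicator_def)
qed

lemma tail_tendsto:
  fixes f :: "real \<Rightarrow> real"
  assumes f0: "\<And>y. y \<in> H \<Longrightarrow> 0 \<le> f y" and fs: "f summable_on H"
  shows "((\<lambda>t. infsum f (H \<inter> {m<..t})) \<longlongrightarrow> 0) (at_right m)"
proof (rule order_tendstoI)
  fix a :: real assume "a < 0"
  have "0 \<le> infsum f (H \<inter> {m<..t})" for t using f0 by (intro infsum_nonneg) auto
  then show "eventually (\<lambda>t. a < infsum f (H \<inter> {m<..t})) (at_right m)" using \<open>a < 0\<close>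
    by (intro always_eventually allI) (meson less_le_trans)
next
  fix a :: real assume a: "0 < a"
  obtain F where F: "finite F" "F \<subseteq> H" "dist (sum f F) (infsum f H) \<le> a / 2"
    using infsum_finite_approximation[OF fs, of "a/2"] a by auto
  have sHF: "f summable_on (H - F)" using fs by (rule summable_on_subset_banach) auto
  have split: "infsum f H = infsum f (H - F) + sum f F"
  proof -
    have "infsum f H = infsum f ((H - F) \<union> F)" using F by (simp add: Un_absorb2)
    also have "\<dots> = infsum f (H - F) + infsum f F"
      using sHF F by (intro infsum_Un_disjoint) auto
    finally show ?thesis using F by simp
  qed
  have rest: "infsum f (H - F) \<le> a / 2" using split F(3) by (simp add: dist_real_def)
  have ev: "eventually (\<lambda>t. \<forall>y\<in>F. \<not> (m < y \<and> y \<le> t)) (at_right m)"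
  proof (rule eventually_ball_finite[OF F(1)], intro ballI)
    fix y assume "y \<in> F"
    show "eventually (\<lambda>t. \<not> (m < y \<and> y \<le> t)) (at_right m)"
    proof (cases "m < y")
      case True
      show ?thesis using eventually_at_right_real[OF True] by (rule eventually_mono) auto
    qed simp
  qed
  then show "eventually (\<lambda>t. infsum f (H \<inter> {m<..t}) < a) (at_right m)"
  proof (rule eventually_mono)
    fix t assume t: "\<forall>y\<in>F. \<not> (m < y \<and> y \<le> t)"
    have "infsum f (H \<inter> {m<..t}) \<le> infsum f (H - F)"
    proof (rule infsum_mono2)
      show "f summable_on (H \<inter> {m<..t})" using fs by (rule summable_on_subset_banach) auto
      show "H \<inter> {m<..t} \<subseteq> H - F" using t by auto
    qed (use sHF f0 in auto)
    then show "infsum f (H \<inter> {m<..t}) < a" using rest a by simp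
  qed
qed

context
  fixes c d :: real and N :: "real \<Rightarrow> real" and H :: "real set"
  assumes cd: "c \<le> d" and Nm: "mono_on {c..d} N" and Hr: "H \<subseteq> {c..d}"
begin

abbreviation "wm \<equiv> (\<lambda>y. N y - left_lim c N y)"
abbreviation "wp \<equiv> (\<lambda>y. right_lim d N y - N y)"

definition N1f :: "real \<Rightarrow> real" where
  "N1f t = N t - infsum (\<lambda>y. wm y * indicator {y..d} t + wp y * indicator {y<..d} t) H"

lemma wm_s: "wm summable_on H" using jm_summable[OF cd Nm Hr] .
lemma wp_s: "wp summable_on H" using jp_summable[OF cd Nm Hr] .
lemma wm_0: "y \<in> H \<Longrightarrow> 0 \<le> wm y" using jm_nonneg[OF cd Nm] Hr by auto
lemma wp_0: "y \<in> H \<Longrightarrow> 0 \<le> wp y" using jp_nonneg[OF cd Nm] Hr by auto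

lemma wm_sub: "wm summable_on (H \<inter> S)" using wm_s by (rule summable_on_subset_banach) auto
lemma wp_sub: "wp summable_on (H \<inter> S)" using wp_s by (rule summable_on_subset_banach) auto

lemma N1f_repr:
  assumes t: "t \<in> {c..d}"
  shows "N1f t = N t - infsum wm (H \<inter> {c..t}) - infsum wp (H \<inter> {c..<t})"
proof -
  have eqm: "(\<lambda>y. wm y * indicator {y..d} t) = (\<lambda>y. wm y * indicator {..t} y)"
    using t by (auto simp: indicator_def)
  have eqp: "(\<lambda>y. wp y * indicator {y<..d} t) = (\<lambda>y. wp y * indicator {..<t} y)"
    using t by (auto simp: indicator_def)
  have eqs: "(\<lambda>y. wm y * indicator {y..d} t + wp y * indicator {y<..d} t) = (\<lambda>y. wm y * indicator {..t} y + wp y * indicator {..<t} y)"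
    using t by (auto simp: indicator_def)
  have "infsum (\<lambda>y. wm y * indicator {y..d} t + wp y * indicator {y<..d} t) H
      = infsum (\<lambda>y. wm y * indicator {y..d} t) H + infsum (\<lambda>y. wp y * indicator {y<..d} t) H"
    unfolding eqm eqp eqs
    by (intro infsum_add summable_indicator_restrict wm_s wp_s)
  also have "infsum (\<lambda>y. wm y * indicator {y..d} t) H = infsum wm (H \<inter> {c..t})"
    unfolding eqm infsum_indicator_restrict using Hr by (intro arg_cong[where f="infsum wm"]) auto
  also have "infsum (\<lambda>y. wp y * indicator {y<..d} t) H = infsum wp (H \<inter> {c..<t})"
    unfolding eqp infsum_indicator_restrict using Hr by (intro arg_cong[where f="infsum wp"]) auto
  finally show ?thesis unfolding N1f_def by simp
qed

lemma infsum_split_Un: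
  fixes f :: "real \<Rightarrow> real"
  assumes "f summable_on H" "A \<inter> B = {}"
  shows "infsum f (H \<inter> (A \<union> B)) = infsum f (H \<inter> A) + infsum f (H \<inter> B)"
proof -
  have "H \<inter> (A \<union> B) = (H \<inter> A) \<union> (H \<inter> B)" by auto
  moreover have "f summable_on (H \<inter> A)" "f summable_on (H \<inter> B)"
    using assms(1) by (auto intro: summable_on_subset_banach)
  ultimately show ?thesis using assms(2) by (simp add: infsum_Un_disjoint disjoint_iff)
qed

lemma N1f_mono: "mono_on {c..d} N1f"
proof (rule mono_onI)
  fix s t assume st: "s \<in> {c..d}" "t \<in> {c..d}" "s \<le> t"
  have m: "infsum wm (H \<inter> {c..t}) = infsum wm (H \<inter> {c..s}) + infsum wm (H \<inter> {s<..t})"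
  proof -
    have "{c..t} = {c..s} \<union> {s<..t}" using st by auto
    moreover have "{c..s} \<inter> {s<..t} = {}" by auto
    ultimately show ?thesis using infsum_split_Un[OF wm_s, of "{c..s}" "{s<..t}"] by simp
  qed
  have p: "infsum wp (H \<inter> {c..<t}) = infsum wp (H \<inter> {c..<s}) + infsum wp (H \<inter> {s..<t})"
  proof -
    have "{c..<t} = {c..<s} \<union> {s..<t}" using st by auto
    moreover have "{c..<s} \<inter> {s..<t} = {}" by auto
    ultimately show ?thesis using infsum_split_Un[OF wp_s, of "{c..<s}" "{s..<t}"] by simp
  qed
  have "infsum wm (H \<inter> {s<..t}) + infsum wp (H \<inter> {s..<t}) = infsum (phi c d N s t) H"
  proof -
    have "infsum (phi c d N s t) H = infsum (\<lambda>y. wm y * indicator {s<..t} y) H + infsum (\<lambda>y. wp y * indicator {s..<t} y) H"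
    proof -
      have "phi c d N s t = (\<lambda>y. wm y * indicator {s<..t} y + wp y * indicator {s..<t} y)"
        by (rule ext) (simp add: phi_def[OF cd Nm])
      then show ?thesis by (simp only:) (intro infsum_add summable_indicator_restrict wm_s wp_s)
    qed
    then show ?thesis by (simp add: infsum_indicator_restrict)
  qed
  also have "\<dots> \<le> N t - N s" using phi_summable_le(2)[OF cd Nm Hr, of s t] st by auto
  finally show "N1f s \<le> N1f t" using N1f_repr[OF st(1)] N1f_repr[OF st(2)] m p by simp
qed

lemma R1_formula:
  assumes m: "m \<in> {c..d}"
  shows "right_lim d N1f m = right_lim d N m - infsum wm (H \<inter> {c..m}) - infsum wp (H \<inter> {c..m})"
proof (cases "m = d")
  case True
  have "infsum wp (H \<inter> {c..d}) = infsum wp (H \<inter> {c..<d})"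
    by (intro infsum_cong_neutral) (auto simp: right_lim_def)
  then show ?thesis using True N1f_repr[of d] cd by (simp add: right_lim_def)
next
  case False
  then have md: "c \<le> m" "m < d" using m by auto
  let ?L = "right_lim d N m - infsum wm (H \<inter> {c..m}) - infsum wp (H \<inter> {c..m})"
  have T1: "(N \<longlongrightarrow> right_lim d N m) (at_right m)" using right_lim_tendsto(1)[OF Nm md] .
  have T2: "((\<lambda>t. infsum wm (H \<inter> {c..m}) + infsum wm (H \<inter> {m<..t})) \<longlongrightarrow> infsum wm (H \<inter> {c..m}) + 0) (at_right m)"
    by (intro tendsto_add tendsto_const tail_tendsto[OF wm_0 wm_s])
  have T3: "((\<lambda>t. infsum wp (H \<inter> {c..m}) + infsum wp (H \<inter> {m<..<t})) \<longlongrightarrow> infsum wp (H \<inter> {c..m}) + 0) (at_right m)"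
  proof (intro tendsto_add tendsto_const)
    show "((\<lambda>t. infsum wp (H \<inter> {m<..<t})) \<longlongrightarrow> 0) (at_right m)"
    proof (rule tendsto_sandwich[OF _ _ tendsto_const tail_tendsto[OF wp_0 wp_s]])
      show "eventually (\<lambda>t. 0 \<le> infsum wp (H \<inter> {m<..<t})) (at_right m)"
        using wp_0 by (intro always_eventually allI infsum_nonneg) auto
      show "eventually (\<lambda>t. infsum wp (H \<inter> {m<..<t}) \<le> infsum wp (H \<inter> {m<..t})) (at_right m)"
        using wp_0 by (intro always_eventually allI infsum_mono2 wp_sub) auto
    qed
  qed
  have ev: "eventually (\<lambda>t. N1f t = N t - (infsum wm (H \<inter> {c..m}) + infsum wm (H \<inter> {m<..t}))
        - (infsum wp (H \<inter> {c..m}) + infsum wp (H \<inter> {m<..<t}))) (at_right m)"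
    using eventually_at_right_real[OF md(2)]
  proof (rule eventually_mono)
    fix t assume t: "t \<in> {m<..<d}"
    have "{c..t} = {c..m} \<union> {m<..t}" "{c..<t} = {c..m} \<union> {m<..<t}" using t md by auto
    then have "infsum wm (H \<inter> {c..t}) = infsum wm (H \<inter> {c..m}) + infsum wm (H \<inter> {m<..t})"
      "infsum wp (H \<inter> {c..<t}) = infsum wp (H \<inter> {c..m}) + infsum wp (H \<inter> {m<..<t})"
      using infsum_split_Un[OF wm_s, of "{c..m}" "{m<..t}"] infsum_split_Un[OF wp_s, of "{c..m}" "{m<..<t}"] by (auto simp: disjoint_iff)
    then show "N1f t = N t - (infsum wm (H \<inter> {c..m}) + infsum wm (H \<inter> {m<..t}))
        - (infsum wp (H \<inter> {c..m}) + infsum wp (H \<inter> {m<..<t}))"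
      using N1f_repr[of t] t md by simp
  qed
  have TT: "(N1f \<longlongrightarrow> ?L) (at_right m)"
    using tendsto_diff[OF tendsto_diff[OF T1 T2] T3] ev by (simp add: tendsto_cong)
  have "right_lim d N1f m = Lim (at_right m) N1f" using False by (simp add: right_lim_def)
  also have "\<dots> = ?L" by (rule tendsto_Lim[OF _ TT]) simp
  finally show ?thesis .
qed

lemma N1f_c: "N1f c = N c"
proof -
  have "infsum wm (H \<inter> {c..c}) = 0" by (intro infsum_0) (auto simp: left_lim_def)
  then show ?thesis using N1f_repr[of c] cd by simp
qed

end


lemma Xif_mono:
  assumes ab: "a < b" and Mm: "mono_on {a..b} M"
  shows "mono_on {M a..M b} (Xif a b M)"
proof (rule mono_onI)
  fix y y' assume y: "y \<in> {M a..M b}" "y' \<in> {M a..M b}" "y \<le> y'"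
  have ne: "a \<in> {x \<in> {a..b}. M x \<le> y}" using y ab by auto
  show "Xif a b M y \<le> Xif a b M y'" unfolding Xif_def
    using ne y by (intro cSup_subset_mono) (auto intro!: bdd_aboveI[of _ b])
qed

lemma mono_meas:
  fixes Z :: "real \<Rightarrow> real"
  assumes "mono_on {c..d} Z" "\<And>y. y \<in> {c..d} \<Longrightarrow> Z y \<in> {a..b}"
  shows "Z \<in> measurable (restrict_space borel {c..d}) (restrict_space borel {a..b})"
  using assms by (intro measurable_restrict_space2 borel_measurable_mono_on_fnc) (auto simp: space_restrict_space)

lemma measure_sum_of:
  assumes "finite_measure A" "finite_measure B" "finite_measure C"
    "emeasure C S = emeasure A S + emeasure B S"
  shows "measure C S = measure A S + measure B S"
  using assms by (simp add: finite_measure.emeasure_eq_measure ennreal_plus[symmetric] del: ennreal_plus)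

theorem mainTheorem5:
  fixes a b :: real and M N g :: "real \<Rightarrow> real"
  assumes ab: "a < b"
    and M_mono: "mono_on {a..b} M"
    and N_mono: "mono_on {M a..M b} N"
    and g_borel: "g \<in> borel_measurable (restrict_space borel (M ` {a..b}))"
    and g_bdd: "bounded (g ` M ` {a..b})"
  defines "H \<equiv> {y \<in> {M a..M b}. \<exists>x1\<in>{a..b}. \<exists>x2\<in>{a..b}. x1 \<noteq> x2 \<and> M x1 = y \<and> M x2 = y}"
    and "X \<equiv> (\<lambda>y. Inf {x \<in> {a..b}. y \<le> M x})"
    and "\<Xi> \<equiv> (\<lambda>y. Sup {x \<in> {a..b}. M x \<le> y})"
    and "dNm \<equiv> (\<lambda>y. N y - left_lim (M a) N y)"
    and "dNp \<equiv> (\<lambda>y. right_lim (M b) N y - N y)"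
    and "N1 \<equiv> (\<lambda>t. N t - (\<Sum>\<^sub>\<infinity>y\<in>{y \<in> {M a..M b}. \<exists>x1\<in>{a..b}. \<exists>x2\<in>{a..b}. x1 \<noteq> x2 \<and> M x1 = y \<and> M x2 = y}.
              (N y - left_lim (M a) N y) * indicator {y..M b} t
              + (right_lim (M b) N y - N y) * indicator {y<..M b} t))"
  shows "LS_integral a b (N \<circ> M) (\<lambda>x. g (M x))
           = LS_integral (M a) (M b) N1 (\<lambda>y. g (M (X y)))
             + (\<Sum>\<^sub>\<infinity>y\<in>H. g (M (X y)) * dNm y)
             + (\<Sum>\<^sub>\<infinity>y\<in>H. g (M (\<Xi> y)) * dNp y)
       \<and> LS_integral a b (N \<circ> M) (\<lambda>x. g (M x))
           = LS_integral (M a) (M b) N1 (\<lambda>y. g (M (\<Xi> y)))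
             + (\<Sum>\<^sub>\<infinity>y\<in>H. g (M (X y)) * dNm y)
             + (\<Sum>\<^sub>\<infinity>y\<in>H. g (M (\<Xi> y)) * dNp y)"
proof -
  have AB: "M a \<le> M b" using Mab[OF ab M_mono] .
  have Hr: "H \<subseteq> {M a..M b}" unfolding H_def by auto
  have HH: "H = Hs a b M" unfolding H_def Hs_def ..
  have XX: "X = Xf a b M" unfolding X_def by (rule ext) (simp add: Xf_def)
  have XiXi: "\<Xi> = Xif a b M" unfolding \<Xi>_def by (rule ext) (simp add: Xif_def)
  have N1eq: "N1 = N1f (M a) (M b) N H"
    by (rule ext) (simp add: N1f_def[OF AB N_mono Hr] N1_def[folded H_def])
  have dNm_eq: "dNm = wm (M a) N" unfolding dNm_def ..
  have dNp_eq: "dNp = wp (M b) N" unfolding dNp_def ..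
  have Xr: "\<And>y. y \<in> {M a..M b} \<Longrightarrow> X y \<in> {a..b}" unfolding XX by (rule Xf_range[OF ab M_mono])
  have Xir: "\<And>y. y \<in> {M a..M b} \<Longrightarrow> \<Xi> y \<in> {a..b}" unfolding XiXi by (rule Xif_range[OF ab M_mono])
  have NMm: "mono_on {a..b} (N \<circ> M)"
  proof (rule mono_onI)
    fix x y assume "x \<in> {a..b}" "y \<in> {a..b}" "x \<le> y"
    then show "(N \<circ> M) x \<le> (N \<circ> M) y"
      using M_range[OF ab M_mono] Mle[OF ab M_mono] N_mono by (auto simp: mono_on_def)
  qed
  have N1m: "mono_on {M a..M b} N1" unfolding N1eq by (rule N1f_mono[OF AB N_mono Hr])
  define \<mu> where "\<mu> = LS_measure a b (N \<circ> M)"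
  define \<mu>1 where "\<mu>1 = LS_measure (M a) (M b) N1"
  have s\<mu>: "sets \<mu> = sets (restrict_space borel {a..b})" and f\<mu>: "finite_measure \<mu>"
    and c\<mu>: "\<And>s. s \<in> {a..b} \<Longrightarrow> measure \<mu> {a..s} = right_lim b (N \<circ> M) s - (N \<circ> M) a"
    unfolding \<mu>_def using LS_measure_props[OF NMm] ab by auto
  have s\<mu>1: "sets \<mu>1 = sets (restrict_space borel {M a..M b})" and f\<mu>1: "finite_measure \<mu>1"
    and c\<mu>1: "\<And>s. s \<in> {M a..M b} \<Longrightarrow> measure \<mu>1 {M a..s} = right_lim (M b) N1 s - N1 (M a)"
    unfolding \<mu>1_def using LS_measure_props[OF N1m AB] by auto
  have sp\<mu>1: "space \<mu>1 = {M a..M b}" using sets_eq_imp_space_eq[OF s\<mu>1] by (simp add: space_restrict_space)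
  have Xm: "X \<in> measurable \<mu>1 (restrict_space borel {a..b})"
    unfolding measurable_cong_sets[OF s\<mu>1 refl] XX
    by (rule mono_meas[OF Xf_mono[OF ab M_mono] Xf_range[OF ab M_mono]])
  have Xim: "\<Xi> \<in> measurable \<mu>1 (restrict_space borel {a..b})"
    unfolding measurable_cong_sets[OF s\<mu>1 refl] XiXi
    by (rule mono_meas[OF Xif_mono[OF ab M_mono] Xif_range[OF ab M_mono]])
  define \<rho>0 where "\<rho>0 = distr \<mu>1 (restrict_space borel {a..b}) X"
  have s\<rho>0: "sets \<rho>0 = sets (restrict_space borel {a..b})" unfolding \<rho>0_def by simp
  have f\<rho>0: "finite_measure \<rho>0" unfolding \<rho>0_def using finite_measure.finite_measure_distr[OF f\<mu>1 Xm] .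
  have wm0: "\<And>y. y \<in> H \<Longrightarrow> 0 \<le> dNm y" unfolding dNm_eq by (rule wm_0[OF AB N_mono Hr])
  have wp0: "\<And>y. y \<in> H \<Longrightarrow> 0 \<le> dNp y" unfolding dNp_eq by (rule wp_0[OF AB N_mono Hr])
  have wms: "dNm summable_on H" unfolding dNm_eq by (rule wm_s[OF AB N_mono Hr])
  have wps: "dNp summable_on H" unfolding dNp_eq by (rule wp_s[OF AB N_mono Hr])
  define Am where "Am = distr (density (count_space H) (\<lambda>y. ennreal (dNm y))) (restrict_space borel {a..b}) X"
  define Ap where "Ap = distr (density (count_space H) (\<lambda>y. ennreal (dNp y))) (restrict_space borel {a..b}) \<Xi>"
  have XrH: "\<And>y. y \<in> H \<Longrightarrow> X y \<in> {a..b}" using Xr Hr by auto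
  have XirH: "\<And>y. y \<in> H \<Longrightarrow> \<Xi> y \<in> {a..b}" using Xir Hr by auto
  have sAm: "sets Am = sets (restrict_space borel {a..b})" and fAm: "finite_measure Am"
    and iAm: "\<And>f. f \<in> borel_measurable (restrict_space borel {a..b}) \<Longrightarrow> bounded (f ` {a..b}) \<Longrightarrow> integral\<^sup>L Am f = infsum (\<lambda>y. f (X y) * dNm y) H"
    and mAm: "\<And>S. S \<in> sets (restrict_space borel {a..b}) \<Longrightarrow> measure Am S = infsum dNm {y\<in>H. X y \<in> S}"
    unfolding Am_def using atom_measure[OF wm0 wms XrH] by auto
  have sAp: "sets Ap = sets (restrict_space borel {a..b})" and fAp: "finite_measure Ap"
    and iAp: "\<And>f. f \<in> borel_measurable (restrict_space borel {a..b}) \<Longrightarrow> bounded (f ` {a..b}) \<Longrightarrow> integral\<^sup>L Ap f = infsum (\<lambda>y. f (\<Xi> y) * dNp y) H"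
    and mAp: "\<And>S. S \<in> sets (restrict_space borel {a..b}) \<Longrightarrow> measure Ap S = infsum dNp {y\<in>H. \<Xi> y \<in> S}"
    unfolding Ap_def using atom_measure[OF wp0 wps XirH] by auto
  obtain C1 where sC1: "sets C1 = sets \<rho>0" and fC1: "finite_measure C1"
    and eC1: "\<forall>S\<in>sets \<rho>0. emeasure C1 S = emeasure \<rho>0 S + emeasure Am S"
    and iC1: "\<forall>f::real \<Rightarrow> real. integrable \<rho>0 f \<longrightarrow> integrable Am f \<longrightarrow> integrable C1 f \<and> integral\<^sup>L C1 f = integral\<^sup>L \<rho>0 f + integral\<^sup>L Am f"
    using sum_measure_ex[of Am \<rho>0] sAm fAm s\<rho>0 f\<rho>0 by auto
  obtain \<rho> where s\<rho>: "sets \<rho> = sets C1" and f\<rho>: "finite_measure \<rho>"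
    and e\<rho>: "\<forall>S\<in>sets C1. emeasure \<rho> S = emeasure C1 S + emeasure Ap S"
    and i\<rho>: "\<forall>f::real \<Rightarrow> real. integrable C1 f \<longrightarrow> integrable Ap f \<longrightarrow> integrable \<rho> f \<and> integral\<^sup>L \<rho> f = integral\<^sup>L C1 f + integral\<^sup>L Ap f"
    using sum_measure_ex[of Ap C1] sAp fAp sC1 s\<rho>0 fC1 by auto
  have \<mu>\<rho>: "\<mu> = \<rho>"
  proof (rule cdf_unique[OF s\<mu> _ f\<mu> f\<rho>])
    show "sets \<rho> = sets (restrict_space borel {a..b})" using s\<rho> sC1 s\<rho>0 by simp
    show "a \<le> b" using ab by simp
    show "\<forall>s\<in>{a..b}. measure \<mu> {a..s} = measure \<rho> {a..s}"
    proof
      fix s assume s: "s \<in> {a..b}"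
      let ?m = "right_lim b M s"
      let ?RN = "right_lim (M b) N"
      have Ms: "M a \<le> M s" "M s \<le> ?m" "?m \<le> M b"
        using Mle[OF ab M_mono, of a s] right_lim_bounds(1,3)[OF M_mono, of s] s by auto
      have mr: "?m \<in> {M a..M b}" using Ms by auto
      have sab: "{a..s} \<in> sets (restrict_space borel {a..b})"
        using s by (subst sets_restrict_space_iff) auto
      have "measure \<rho> {a..s} = measure C1 {a..s} + measure Ap {a..s}"
        using e\<rho> sab sC1 s\<rho>0 by (intro measure_sum_of[OF fC1 fAp f\<rho>]) auto
      also have "measure C1 {a..s} = measure \<rho>0 {a..s} + measure Am {a..s}"
        using eC1 sab s\<rho>0 by (intro measure_sum_of[OF f\<rho>0 fAm fC1]) auto
      also have "measure \<rho>0 {a..s} = measure \<mu>1 {M a..?m}"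
      proof -
        have "X -` {a..s} \<inter> space \<mu>1 = {M a..?m}"
        proof (intro set_eqI iffI)
          fix y assume "y \<in> X -` {a..s} \<inter> space \<mu>1"
          then have y: "y \<in> {M a..M b}" "X y \<le> s" using sp\<mu>1 by auto
          then show "y \<in> {M a..?m}" using Xf_le_iff[OF ab M_mono s y(1)] XX by auto
        next
          fix y assume y: "y \<in> {M a..?m}"
          then have y': "y \<in> {M a..M b}" using Ms by auto
          then have "X y \<le> s" using Xf_le_iff[OF ab M_mono s y'] XX y by auto
          then show "y \<in> X -` {a..s} \<inter> space \<mu>1" using Xr[OF y'] y' sp\<mu>1 by auto
        qed
        then show ?thesis unfolding \<rho>0_def by (simp add: measure_distr[OF Xm sab])
      qed
      also have "measure \<mu>1 {M a..?m} = ?RN ?m - infsum dNm (H \<inter> {M a..?m}) - infsum dNp (H \<inter> {M a..?m}) - N (M a)"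
        using c\<mu>1[OF mr] R1_formula[OF AB N_mono Hr mr] N1f_c[OF AB N_mono Hr] N1eq dNm_eq dNp_eq by simp
      also have "measure Am {a..s} = infsum dNm (H \<inter> {M a..?m})"
      proof -
        have "{y\<in>H. X y \<in> {a..s}} = H \<inter> {M a..?m}"
        proof (intro set_eqI iffI)
          fix y assume y: "y \<in> {y\<in>H. X y \<in> {a..s}}"
          then have y': "y \<in> {M a..M b}" using Hr by auto
          show "y \<in> H \<inter> {M a..?m}" using y Xf_le_iff[OF ab M_mono s y'] XX y' by auto
        next
          fix y assume y: "y \<in> H \<inter> {M a..?m}"
          then have y': "y \<in> {M a..M b}" using Hr by auto
          show "y \<in> {y\<in>H. X y \<in> {a..s}}" using y Xf_le_iff[OF ab M_mono s y'] XX Xr[OF y'] by auto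
        qed
        then show ?thesis using mAm[OF sab] by simp
      qed
      also have "measure Ap {a..s} = infsum dNp {y\<in>H. \<forall>x\<in>{s<..b}. y < M x}"
      proof -
        have "{y\<in>H. \<Xi> y \<in> {a..s}} = {y\<in>H. \<forall>x\<in>{s<..b}. y < M x}"
        proof (intro set_eqI iffI)
          fix y assume y: "y \<in> {y\<in>H. \<Xi> y \<in> {a..s}}"
          then have y': "y \<in> {M a..M b}" using Hr by auto
          show "y \<in> {y\<in>H. \<forall>x\<in>{s<..b}. y < M x}" using y Xif_le_iff[OF ab M_mono s y'] XiXi by auto
        next
          fix y assume y: "y \<in> {y\<in>H. \<forall>x\<in>{s<..b}. y < M x}"
          then have y': "y \<in> {M a..M b}" using Hr by auto
          show "y \<in> {y\<in>H. \<Xi> y \<in> {a..s}}" using y Xif_le_iff[OF ab M_mono s y'] XiXi Xir[OF y'] by auto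
        qed
        then show ?thesis using mAp[OF sab] by simp
      qed
      finally have r: "measure \<rho> {a..s} = ?RN ?m - infsum dNm (H \<inter> {M a..?m}) - infsum dNp (H \<inter> {M a..?m}) - N (M a)
          + infsum dNm (H \<inter> {M a..?m}) + infsum dNp {y\<in>H. \<forall>x\<in>{s<..b}. y < M x}" .
      have mu: "measure \<mu> {a..s} = right_lim b (N \<circ> M) s - N (M a)" using c\<mu>[OF s] by simp
      show "measure \<mu> {a..s} = measure \<rho> {a..s}"
      proof (cases "s < b \<and> (\<exists>x1\<in>{s<..b}. M x1 = ?m)")
        case True
        then obtain x1 where x1: "x1 \<in> {s<..b}" "M x1 = ?m" and sb: "s < b" by auto
        have flat: "M x = ?m" if x: "x \<in> {s<..x1}" for x
        proof -
          have "?m \<le> M x" using right_lim_bounds(2)[OF M_mono, of s x] s x x1 by auto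
          moreover have "M x \<le> M x1" using Mle[OF ab M_mono, of x x1] x x1 s by auto
          ultimately show ?thesis using x1 by simp
        qed
        have mH: "?m \<in> H"
        proof -
          let ?x = "(s + x1) / 2"
          have "?x \<in> {s<..x1}" using x1 by auto
          then have "M ?x = ?m" by (rule flat)
          moreover have "?x \<in> {a..b}" "x1 \<in> {a..b}" "?x \<noteq> x1" using x1 s by auto
          ultimately show ?thesis unfolding H_def using mr x1 by blast
        qed
        have Dp: "{y\<in>H. \<forall>x\<in>{s<..b}. y < M x} = H \<inter> {M a..<?m}"
        proof (intro set_eqI iffI)
          fix y assume y: "y \<in> {y\<in>H. \<forall>x\<in>{s<..b}. y < M x}"
          then have "y < M x1" using x1(1) by blast
          then show "y \<in> H \<inter> {M a..<?m}" using x1 Hr y by auto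
        next
          fix y assume y: "y \<in> H \<inter> {M a..<?m}"
          have "\<forall>x\<in>{s<..b}. y < M x"
          proof
            fix x assume "x \<in> {s<..b}"
            then have "?m \<le> M x" using right_lim_bounds(2)[OF M_mono, of s x] s by auto
            then show "y < M x" using y by auto
          qed
          then show "y \<in> {y\<in>H. \<forall>x\<in>{s<..b}. y < M x}" using y by auto
        qed
        have split: "infsum dNp (H \<inter> {M a..?m}) = infsum dNp (H \<inter> {M a..<?m}) + dNp ?m"
        proof -
          have "{M a..?m} = {M a..<?m} \<union> {?m}" using Ms by auto
          moreover have "{M a..<?m} \<inter> {?m} = {}" by auto
          moreover have "H \<inter> {?m} = {?m}" using mH by auto
          ultimately show ?thesis using infsum_split_Un[OF AB N_mono Hr wps, of "{M a..<?m}" "{?m}"] by simp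
        qed
        have RNM: "right_lim b (N \<circ> M) s = N ?m"
        proof -
          have ev: "eventually (\<lambda>x. (N \<circ> M) x = N ?m) (at_right s)"
            using eventually_at_right_real[of s x1] x1
            by (auto elim!: eventually_mono simp: flat)
          have "((N \<circ> M) \<longlongrightarrow> N ?m) (at_right s)" by (rule tendsto_eventually[OF ev])
          then show ?thesis unfolding right_lim_def using sb by (simp add: tendsto_Lim)
        qed
        show ?thesis using mu r Dp split RNM unfolding dNp_def by simp
      next
        case False
        have Dp: "{y\<in>H. \<forall>x\<in>{s<..b}. y < M x} = H \<inter> {M a..?m}"
        proof (cases "s = b")
          case True
          then show ?thesis using Hr by (auto simp: right_lim_def)
        next
          case False2: False
          then have sb: "s < b" using s by auto
          have ne: "\<And>x. x \<in> {s<..b} \<Longrightarrow> M x \<noteq> ?m" using False sb by auto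
          have ge: "\<And>x. x \<in> {s<..b} \<Longrightarrow> ?m \<le> M x" using right_lim_bounds(2)[OF M_mono, of s] s by auto
          show ?thesis
          proof (intro set_eqI iffI)
            fix y assume y: "y \<in> {y\<in>H. \<forall>x\<in>{s<..b}. y < M x}"
            have "y \<le> ?m"
            proof (rule ccontr)
              assume "\<not> y \<le> ?m"
              then have "Inf (M ` {s<..b}) < y" using right_lim_tendsto(2)[OF M_mono, of s] s sb by auto
              then obtain x where xx: "x \<in> {s<..b}" "M x < y" using cInf_lessD[of "M ` {s<..b}" y] sb by auto
              have "y < M x" using y xx(1) by blast
              then show False using xx(2) by simp
            qed
            then show "y \<in> H \<inter> {M a..?m}" using y Hr by auto
          next
            fix y assume y: "y \<in> H \<inter> {M a..?m}"
            have "\<forall>x\<in>{s<..b}. y < M x" using y ne ge by (metis IntD2 atLeastAtMost_iff le_less le_less_trans)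
            then show "y \<in> {y\<in>H. \<forall>x\<in>{s<..b}. y < M x}" using y by auto
          qed
        qed
        have RNM: "right_lim b (N \<circ> M) s = ?RN ?m"
        proof (cases "s = b")
          case True then show ?thesis by (simp add: right_lim_def)
        next
          case False2: False
          then have sb: "s < b" using s by auto
          have ne: "\<And>x. x \<in> {s<..b} \<Longrightarrow> M x \<noteq> ?m" using False sb by auto
          have ge: "\<And>x. x \<in> {s<..b} \<Longrightarrow> ?m \<le> M x" using right_lim_bounds(2)[OF M_mono, of s] s by auto
          have mb: "?m < M b" using ne[of b] ge[of b] sb by auto
          have FM: "filterlim M (at_right ?m) (at_right s)"
          proof (rule tendsto_imp_filterlim_at_right)
            show "(M \<longlongrightarrow> ?m) (at_right s)" using right_lim_tendsto(1)[OF M_mono, of s] s sb by auto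
            show "eventually (\<lambda>x. ?m < M x) (at_right s)"
              using eventually_at_right_real[OF sb]
            proof (rule eventually_mono)
              fix x assume "x \<in> {s<..<b}"
              then have "x \<in> {s<..b}" by auto
              then show "?m < M x" using ne ge by (metis le_less)
            qed
          qed
          have TN: "(N \<longlongrightarrow> ?RN ?m) (at_right ?m)" using right_lim_tendsto(1)[OF N_mono, of ?m] Ms mb by auto
          have "((\<lambda>x. N (M x)) \<longlongrightarrow> ?RN ?m) (at_right s)" by (rule filterlim_compose[OF TN FM])
          then have "((N \<circ> M) \<longlongrightarrow> ?RN ?m) (at_right s)" by (simp add: comp_def)
          then show ?thesis unfolding right_lim_def using sb by (simp add: tendsto_Lim)
        qed
        show ?thesis using mu r Dp RNM by simp
      qed
    qed
  qed
  define G where "G = (\<lambda>x. g (M x))"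
  have GM: "G \<in> borel_measurable (restrict_space borel {a..b})"
  proof -
    have "M \<in> measurable (restrict_space borel {a..b}) (restrict_space borel (M ` {a..b}))"
      by (intro measurable_restrict_space2 borel_measurable_mono_on_fnc[OF M_mono]) (auto simp: space_restrict_space)
    from measurable_comp[OF this g_borel] show ?thesis by (simp add: G_def comp_def)
  qed
  have Gb: "bounded (G ` {a..b})" using g_bdd by (simp add: G_def image_image)
  obtain B where B: "\<And>x. x \<in> {a..b} \<Longrightarrow> \<bar>G x\<bar> \<le> B"
    using Gb unfolding bounded_iff by (metis image_eqI real_norm_def)
  have Gint: "integrable K G" if "sets K = sets (restrict_space borel {a..b})" "finite_measure K" for K
  proof -
    have sp: "space K = {a..b}" using sets_eq_imp_space_eq[OF that(1)] by (simp add: space_restrict_space)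
    show ?thesis
    proof (rule finite_measure.integrable_const_bound[OF that(2), where B=B])
      show "AE x in K. norm (G x) \<le> B" using B sp by auto
      show "G \<in> borel_measurable K" by (subst measurable_cong_sets[OF that(1) refl]) (rule GM)
    qed
  qed
  have sC1': "sets C1 = sets (restrict_space borel {a..b})" using sC1 s\<rho>0 by simp
  have "LS_integral a b (N \<circ> M) (\<lambda>x. g (M x)) = integral\<^sup>L \<rho> G"
    unfolding LS_integral_def \<mu>_def[symmetric] \<mu>\<rho> G_def ..
  also have "\<dots> = integral\<^sup>L C1 G + integral\<^sup>L Ap G"
    using i\<rho> Gint[OF sC1' fC1] Gint[OF sAp fAp] by blast
  also have "integral\<^sup>L C1 G = integral\<^sup>L \<rho>0 G + integral\<^sup>L Am G"
    using iC1 Gint[OF s\<rho>0 f\<rho>0] Gint[OF sAm fAm] by blast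
  also have "integral\<^sup>L \<rho>0 G = LS_integral (M a) (M b) N1 (\<lambda>y. g (M (X y)))"
    unfolding \<rho>0_def LS_integral_def \<mu>1_def[symmetric] using integral_distr[OF Xm GM] by (simp add: G_def)
  also have "integral\<^sup>L Am G = (\<Sum>\<^sub>\<infinity>y\<in>H. g (M (X y)) * dNm y)"
    using iAm[OF GM Gb] by (simp add: G_def)
  also have "integral\<^sup>L Ap G = (\<Sum>\<^sub>\<infinity>y\<in>H. g (M (\<Xi> y)) * dNp y)"
    using iAp[OF GM Gb] by (simp add: G_def)
  finally have first: "LS_integral a b (N \<circ> M) (\<lambda>x. g (M x))
           = LS_integral (M a) (M b) N1 (\<lambda>y. g (M (X y)))
             + (\<Sum>\<^sub>\<infinity>y\<in>H. g (M (X y)) * dNm y)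
             + (\<Sum>\<^sub>\<infinity>y\<in>H. g (M (\<Xi> y)) * dNp y)" .
  have atom0: "measure \<mu>1 {y} = 0" if yH: "y \<in> H" for y
  proof -
    let ?RN = "right_lim (M b) N" and ?L = "left_lim (M a) N"
    have yr: "y \<in> {M a..M b}" using yH Hr by auto
    have inS: "S \<in> sets \<mu>1" if "S \<subseteq> {M a..M b}" "S \<in> sets borel" for S
      using that unfolding s\<mu>1 by (subst sets_restrict_space_iff) auto
    have R1: "right_lim (M b) N1 t = ?RN t - infsum dNm (H \<inter> {M a..t}) - infsum dNp (H \<inter> {M a..t})"
      if "t \<in> {M a..M b}" for t
      using R1_formula[OF AB N_mono Hr that] N1eq dNm_eq dNp_eq by simp
    show ?thesis
    proof (cases "y = M a")
      case True
      have "measure \<mu>1 {y} = measure \<mu>1 {M a..M a}" using True by simp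
      also have "\<dots> = right_lim (M b) N1 (M a) - N1 (M a)" using c\<mu>1[of "M a"] AB by simp
      also have "\<dots> = ?RN (M a) - dNm (M a) - dNp (M a) - N (M a)"
      proof -
        have "H \<inter> {M a..M a} = {M a}" using yH True by auto
        then show ?thesis using R1[of "M a"] AB N1f_c[OF AB N_mono Hr] N1eq by simp
      qed
      also have "\<dots> = 0" unfolding dNm_def dNp_def by (simp add: left_lim_def)
      finally show ?thesis .
    next
      case False
      then have ya: "M a < y" "y \<le> M b" using yr by auto
      have bound: "measure \<mu>1 {y} \<le> ?L y - N t" if t: "M a \<le> t" "t < y" for t
      proof -
        have tr: "t \<in> {M a..M b}" using t ya by auto
        have "measure \<mu>1 {y} \<le> measure \<mu>1 {t<..y}"
          using t ya by (intro finite_measure.finite_measure_mono[OF f\<mu>1] inS) auto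
        also have "measure \<mu>1 {t<..y} = measure \<mu>1 {M a..y} - measure \<mu>1 {M a..t}"
        proof -
          have "{t<..y} = {M a..y} - {M a..t}" using t by auto
          then show ?thesis using t ya by (simp add: finite_measure.finite_measure_Diff[OF f\<mu>1] inS)
        qed
        also have "\<dots> = right_lim (M b) N1 y - right_lim (M b) N1 t" using c\<mu>1[OF yr] c\<mu>1[OF tr] by simp
        also have "\<dots> = (?RN y - ?RN t) - (infsum dNm (H \<inter> {M a..y}) - infsum dNm (H \<inter> {M a..t}))
            - (infsum dNp (H \<inter> {M a..y}) - infsum dNp (H \<inter> {M a..t}))" using R1[OF yr] R1[OF tr] by simp
        also have "infsum dNm (H \<inter> {M a..y}) - infsum dNm (H \<inter> {M a..t}) = infsum dNm (H \<inter> {t<..y})"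
        proof -
          have "{M a..y} = {M a..t} \<union> {t<..y}" "{M a..t} \<inter> {t<..y} = {}" using t by auto
          then show ?thesis using infsum_split_Un[OF AB N_mono Hr wms, of "{M a..t}" "{t<..y}"] by simp
        qed
        also have "infsum dNp (H \<inter> {M a..y}) - infsum dNp (H \<inter> {M a..t}) = infsum dNp (H \<inter> {t<..y})"
        proof -
          have "{M a..y} = {M a..t} \<union> {t<..y}" "{M a..t} \<inter> {t<..y} = {}" using t by auto
          then show ?thesis using infsum_split_Un[OF AB N_mono Hr wps, of "{M a..t}" "{t<..y}"] by simp
        qed
        finally have ch: "measure \<mu>1 {y} \<le> (?RN y - ?RN t) - infsum dNm (H \<inter> {t<..y}) - infsum dNp (H \<inter> {t<..y})" .
        have "dNm y \<le> infsum dNm (H \<inter> {t<..y})"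
        proof -
          have "sum dNm {y} \<le> infsum dNm (H \<inter> {t<..y})"
            using yH t wm0 by (intro finite_sum_le_infsum) (auto intro: summable_on_subset_banach[OF wms])
          then show ?thesis by simp
        qed
        moreover have "dNp y \<le> infsum dNp (H \<inter> {t<..y})"
        proof -
          have "sum dNp {y} \<le> infsum dNp (H \<inter> {t<..y})"
            using yH t wp0 by (intro finite_sum_le_infsum) (auto intro: summable_on_subset_banach[OF wps])
          then show ?thesis by simp
        qed
        moreover have "N t \<le> ?RN t" using right_lim_bounds(1)[OF N_mono] tr by auto
        ultimately show ?thesis using ch unfolding dNm_def dNp_def by linarith
      qed
      have lim: "((\<lambda>t. ?L y - N t) \<longlongrightarrow> ?L y - ?L y) (at_left y)"
        by (intro tendsto_diff tendsto_const left_lim_tendsto(1)[OF N_mono ya])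
      have "measure \<mu>1 {y} \<le> ?L y - ?L y"
      proof (rule tendsto_le[OF _ lim tendsto_const])
        show "\<not> trivial_limit (at_left y)" by simp
        show "eventually (\<lambda>t. measure \<mu>1 {y} \<le> ?L y - N t) (at_left y)"
          using eventually_at_left_real[OF ya(1)] by (rule eventually_mono) (use bound in auto)
      qed
      then show ?thesis using measure_nonneg[of \<mu>1 "{y}"] by simp
    qed
  qed
  have Hnull: "H \<in> null_sets \<mu>1"
  proof -
    have single: "{y} \<in> sets \<mu>1" if "y \<in> H" for y
      using that Hr unfolding s\<mu>1 by (subst sets_restrict_space_iff) auto
    have cH: "countable H" using H_countable[OF ab M_mono] HH by simp
    have Hs: "H \<in> sets \<mu>1" using sets.countable[OF single cH] by auto
    have "emeasure \<mu>1 H = (\<integral>\<^sup>+y. emeasure \<mu>1 {y} \<partial>count_space H)"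
      by (rule emeasure_countable_singleton[OF single cH])
    also have "\<dots> = (\<integral>\<^sup>+y. 0 \<partial>count_space H)"
      using atom0 finite_measure.emeasure_eq_measure[OF f\<mu>1] by (intro nn_integral_cong) simp
    finally show ?thesis using Hs by (simp add: null_sets_def)
  qed
  have "LS_integral (M a) (M b) N1 (\<lambda>y. g (M (X y))) = LS_integral (M a) (M b) N1 (\<lambda>y. g (M (\<Xi> y)))"
    unfolding LS_integral_def \<mu>1_def[symmetric]
  proof (rule integral_cong_AE)
    show "(\<lambda>y. g (M (X y))) \<in> borel_measurable \<mu>1"
      using measurable_comp[OF Xm GM] by (simp add: G_def comp_def)
    show "(\<lambda>y. g (M (\<Xi> y))) \<in> borel_measurable \<mu>1"
      using measurable_comp[OF Xim GM] by (simp add: G_def comp_def)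
    show "AE y in \<mu>1. g (M (X y)) = g (M (\<Xi> y))"
    proof (rule AE_I'[OF Hnull])
      show "{y \<in> space \<mu>1. g (M (X y)) \<noteq> g (M (\<Xi> y))} \<subseteq> H"
      proof
        fix y assume y: "y \<in> {y \<in> space \<mu>1. g (M (X y)) \<noteq> g (M (\<Xi> y))}"
        then have "y \<in> {M a..M b}" "X y \<noteq> \<Xi> y" using sp\<mu>1 by auto
        then show "y \<in> H" using X_ne_Xi_imp_H[OF ab M_mono] XX XiXi HH by auto
      qed
    qed
  qed
  then show ?thesis using first by simp
qed


end
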